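(* Let $\mathbb{S}=\{1,2,\ldots,N\}$ with $N\in\mathbb{N}\cup\{\infty\}$ and for each $z\in\mathbb{R}^d$ let $Q(z)=(q_{ij}(z))_{i,j\in\mathbb{S}}$ be a transition rate matrix. Assume (A2): for each $z$, $Q(z)$ is conservative and irreducible, and $\sup_{i\in\mathbb{S}}\sum_{j\neq i}\sup_{z\in\mathbb{R}^d}q_{ij}(z)<\infty$. Then for every $x,y\in\mathbb{R}^d$ and every $i_0\in\mathbb{S}$ there is a coupling $(Y_t^x,\tilde Y_t^y)_{t\ge0}$, where $Y^x$ is a continuous-time Markov chain with transition rate matrix $Q(x)$ and $\tilde Y^y$ is a continuous-time Markov chain with transition rate matrix $Q(y)$, both started at $i_0$, such that $$\frac1t\int_0^t\mathbb{P}(Y_s^x\ne\tilde Y_s^y)\,ds\le t\,\|Q(x)-Q(y)\|_{\ell_1},\qquad t>0,$$ where $\|Q(x)-Q(y)\|_{\ell_1}=\sup_{i\in\mathbb{S}}\sum_{j\ne i}|q_{ij}(x)-q_{ij}(y)|$.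
   Context: Conservative means $q_{ij}(z)\ge0$ for $i\ne j$ and $\sum_j q_{ij}(z)=0$. *)

theory Defs
  imports "HOL-Probability.Probability" "HOL-Library.Extended_Nat"
begin

definition state_space :: "enat \<Rightarrow> nat set" where
  "state_space N = {i. 1 \<le> i \<and> enat i \<le> N}"

definition conservative :: "nat set \<Rightarrow> (nat \<Rightarrow> nat \<Rightarrow> real) \<Rightarrow> bool" where
  "conservative S q \<longleftrightarrow>
     (\<forall>i\<in>S. \<forall>j\<in>S. i \<noteq> j \<longrightarrow> q i j \<ge> 0) \<and>
     (\<forall>i\<in>S. ((\<lambda>j. q i j) has_sum 0) S)"

definition irreducible_Q :: "nat set \<Rightarrow> (nat \<Rightarrow> nat \<Rightarrow> real) \<Rightarrow> bool" where
  "irreducible_Q S q \<longleftrightarrow>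
     (\<forall>i\<in>S. \<forall>j\<in>S. (i, j) \<in> {(a, b). a \<in> S \<and> b \<in> S \<and> a \<noteq> b \<and> q a b > 0}\<^sup>*)"

definition uniformly_bounded_rates ::
    "nat set \<Rightarrow> ('z \<Rightarrow> nat \<Rightarrow> nat \<Rightarrow> real) \<Rightarrow> bool" where
  "uniformly_bounded_rates S Q \<longleftrightarrow>
     (SUP i\<in>S. \<integral>\<^sup>+ j. (SUP z. ennreal (Q z i j)) \<partial>count_space (S - {i})) < \<infinity>"

definition Q_dist :: "nat set \<Rightarrow> (nat \<Rightarrow> nat \<Rightarrow> real) \<Rightarrow> (nat \<Rightarrow> nat \<Rightarrow> real) \<Rightarrow> real" where
  "Q_dist S q q' = (SUP i\<in>S. \<Sum>\<^sub>\<infinity> j\<in>S - {i}. \<bar>q i j - q' i j\<bar>)"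

definition transition_function ::
    "nat set \<Rightarrow> (nat \<Rightarrow> nat \<Rightarrow> real) \<Rightarrow> (nat \<Rightarrow> nat \<Rightarrow> real \<Rightarrow> real) \<Rightarrow> bool" where
  "transition_function S q p \<longleftrightarrow>
     (\<forall>i\<in>S. \<forall>j\<in>S. \<forall>t\<ge>0. p i j t \<ge> 0) \<and>
     (\<forall>i\<in>S. \<forall>t\<ge>0. ((\<lambda>j. p i j t) has_sum 1) S) \<and>
     (\<forall>i\<in>S. \<forall>j\<in>S. \<forall>s\<ge>0. \<forall>t\<ge>0.
        ((\<lambda>k. p i k s * p k j t) has_sum p i j (s + t)) S) \<and>
     (\<forall>i\<in>S. \<forall>j\<in>S. p i j 0 = (if i = j then 1 else 0)) \<and>
     (\<forall>i\<in>S. \<forall>j\<in>S. (p i j has_real_derivative q i j) (at_right 0))"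

definition is_ctmc ::
    "'w measure \<Rightarrow> nat set \<Rightarrow> (nat \<Rightarrow> nat \<Rightarrow> real) \<Rightarrow> nat \<Rightarrow> (real \<Rightarrow> 'w \<Rightarrow> nat) \<Rightarrow> bool" where
  "is_ctmc M S q i0 Y \<longleftrightarrow>
     prob_space M \<and>
     (\<forall>t\<ge>0. Y t \<in> measurable M (count_space UNIV)) \<and>
     (\<forall>\<omega>\<in>space M. \<forall>t\<ge>0. Y t \<omega> \<in> S) \<and>
     (\<forall>\<omega>\<in>space M. \<forall>t\<ge>0. \<exists>e>0. \<forall>s. t \<le> s \<and> s < t + e \<longrightarrow> Y s \<omega> = Y t \<omega>) \<and>
     (\<exists>p. transition_function S q p \<and>
        (\<forall>(n::nat) (ts::nat \<Rightarrow> real) (js::nat \<Rightarrow> nat).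
           ts 0 = 0 \<longrightarrow> (\<forall>k<n. ts k < ts (Suc k)) \<longrightarrow> (\<forall>k\<le>n. js k \<in> S) \<longrightarrow>
           measure M {\<omega>\<in>space M. \<forall>k\<le>n. Y (ts k) \<omega> = js k} =
             (if js 0 = i0 then 1 else 0) *
             (\<Prod>k<n. p (js k) (js (Suc k)) (ts (Suc k) - ts k))))"

end

theory Submission
  imports Defs
begin


definition hold :: "real \<Rightarrow> real" where
  "hold x = (if 0 < x then x else 1)"

lemma hold_pos: "0 < hold x" by (simp add: hold_def)

lemma hold_measurable[measurable]: "hold \<in> borel_measurable borel"
  unfolding hold_def by measurable

definition muH :: "real \<Rightarrow> real measure" where
  "muH l = density lborel (exponential_density l)"

definition muU :: "real measure" where
  "muU = uniform_measure lborel {0..1}"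

definition mu :: "real \<Rightarrow> (real \<times> real) measure" where
  "mu l = muH l \<Otimes>\<^sub>M muU"

definition SS :: "real \<Rightarrow> (real \<times> real) stream measure" where
  "SS l = stream_space (mu l)"

lemma sets_muH[simp, measurable_cong]: "sets (muH l) = sets borel"
  by (simp add: muH_def)
lemma space_muH[simp]: "space (muH l) = UNIV"
  by (simp add: muH_def)
lemma sets_muU[simp, measurable_cong]: "sets muU = sets borel"
  by (simp add: muU_def)
lemma space_muU[simp]: "space muU = UNIV"
  by (simp add: muU_def)
lemma sets_mu[simp, measurable_cong]: "sets (mu l) = sets (borel \<Otimes>\<^sub>M borel)"
  unfolding mu_def by (rule sets_pair_measure_cong) simp_all
lemma space_mu[simp]: "space (mu l) = UNIV"
  by (simp add: mu_def space_pair_measure)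
lemma space_SS[simp]: "space (SS l) = UNIV"
  by (simp add: SS_def space_stream_space)
lemma sets_SS[measurable_cong]: "sets (SS l) = sets (stream_space (borel \<Otimes>\<^sub>M borel))"
  unfolding SS_def by (rule sets_stream_space_cong) simp

lemma prob_space_muU: "prob_space muU"
  unfolding muU_def by (rule prob_space_uniform_measure) auto

lemma emeasure_muU: "B \<in> sets borel \<Longrightarrow> emeasure muU B = emeasure lborel ({0..1} \<inter> B)"
  unfolding muU_def by (subst emeasure_uniform_measure) (auto simp: divide_ennreal_def)

locale ctmc_lam =
  fixes lam :: real
  assumes lam_pos: "0 < lam"
begin

lemma prob_space_muH: "prob_space (muH lam)"
  unfolding muH_def using lam_pos by (rule prob_space_exponential_density)

lemma prob_space_mu: "prob_space (mu lam)"
  unfolding mu_def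
proof -
  interpret A: prob_space "muH lam" by (rule prob_space_muH)
  interpret B: prob_space muU by (rule prob_space_muU)
  interpret pair_prob_space "muH lam" muU ..
  show "prob_space (muH lam \<Otimes>\<^sub>M muU)" by unfold_locales
qed

lemma prob_space_SS: "prob_space (SS lam)"
  unfolding SS_def using prob_space_mu by (rule prob_space.prob_space_stream_space)

lemma nn_integral_SS:
  assumes "f \<in> borel_measurable (SS lam)"
  shows "(\<integral>\<^sup>+X. f X \<partial>SS lam) = (\<integral>\<^sup>+x. (\<integral>\<^sup>+X. f (x ## X) \<partial>SS lam) \<partial>mu lam)"
  using prob_space.nn_integral_stream_space[OF prob_space_mu, of f] assms unfolding SS_def by simp

lemma memoryless:
  assumes f[measurable]: "f \<in> borel_measurable borel" and t: "0 \<le> t"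
  shows "(\<integral>\<^sup>+x. indicator {t<..} (hold x) * f (hold x - t) \<partial>muH lam) = ennreal (exp (- lam * t)) * (\<integral>\<^sup>+x. f x \<partial>muH lam)"
proof -
  have "(\<integral>\<^sup>+x. indicator {t<..} (hold x) * f (hold x - t) \<partial>muH lam)
      = (\<integral>\<^sup>+x. ennreal (exponential_density lam x) * (indicator {t<..} (hold x) * f (hold x - t)) \<partial>lborel)"
    unfolding muH_def by (subst nn_integral_density) auto
  also have "\<dots> = (\<integral>\<^sup>+x. ennreal (exponential_density lam x) * (indicator {t<..} x * f (x - t)) \<partial>lborel)"
    using t by (intro nn_integral_cong_AE, use AE_lborel_singleton[of 0] in eventually_elim)
      (auto simp: hold_def exponential_density_def split: split_indicator)
  also have "\<dots> = (\<integral>\<^sup>+x. ennreal (exponential_density lam (t + x)) * (indicator {t<..} (t + x) * f (t + x - t)) \<partial>lborel)"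
    using nn_integral_real_affine[of "\<lambda>x. ennreal (exponential_density lam x) * (indicator {t<..} x * f (x - t))" 1 t]
    by simp
  also have "\<dots> = (\<integral>\<^sup>+x. ennreal (exp (- lam * t)) * (ennreal (exponential_density lam x) * f x) \<partial>lborel)"
  proof (intro nn_integral_cong_AE, use AE_lborel_singleton[of 0] in eventually_elim)
    fix x :: real assume "x \<noteq> 0"
    show "ennreal (exponential_density lam (t + x)) * (indicator {t<..} (t + x) * f (t + x - t)) =
          ennreal (exp (- lam * t)) * (ennreal (exponential_density lam x) * f x)"
    proof (cases "0 < x")
      case True
      have "exponential_density lam (t + x) = exp (- lam * t) * exponential_density lam x"
        using True t by (simp add: exponential_density_def algebra_simps flip: exp_add)
      then show ?thesis using True t lam_pos
        by (simp add: ennreal_mult' mult.assoc exponential_density_nonneg)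
    next
      case False
      then show ?thesis using \<open>x \<noteq> 0\<close> by (simp add: exponential_density_def)
    qed
  qed
  also have "\<dots> = ennreal (exp (- lam * t)) * (\<integral>\<^sup>+x. f x \<partial>muH lam)"
    unfolding muH_def by (subst nn_integral_cmult) (auto simp: nn_integral_density)
  finally show ?thesis .
qed

end


definition T :: "(real \<times> real) stream \<Rightarrow> nat \<Rightarrow> real" where
  "T \<omega> n = (\<Sum>l<n. hold (fst (\<omega> !! l)))"

fun Z :: "('a \<Rightarrow> real \<Rightarrow> 'a) \<Rightarrow> 'a \<Rightarrow> (real \<times> real) stream \<Rightarrow> nat \<Rightarrow> 'a" where
  "Z F i \<omega> 0 = i"
| "Z F i \<omega> (Suc n) = Z F (F i (snd (shd \<omega>))) (stl \<omega>) n"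

definition X :: "('a \<Rightarrow> real \<Rightarrow> 'a) \<Rightarrow> 'a \<Rightarrow> 'a \<Rightarrow> (real \<times> real) stream \<Rightarrow> real \<Rightarrow> 'a" where
  "X F c i \<omega> t = (if \<exists>n. T \<omega> n \<le> t \<and> t < T \<omega> (Suc n) then Z F i \<omega> (LEAST n. t < T \<omega> (Suc n)) else c)"

definition shiftT :: "nat \<Rightarrow> real \<Rightarrow> (real \<times> real) stream \<Rightarrow> (real \<times> real) stream" where
  "shiftT n s \<omega> = (T \<omega> (Suc n) - s, snd (\<omega> !! n)) ## sdrop (Suc n) \<omega>"

lemma T_0[simp]: "T \<omega> 0 = 0" by (simp add: T_def)
lemma T_Suc: "T \<omega> (Suc n) = T \<omega> n + hold (fst (\<omega> !! n))" by (simp add: T_def)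
lemma T_Stream: "T (x ## \<omega>) (Suc n) = hold (fst x) + T \<omega> n"
  unfolding T_def by (subst sum.lessThan_Suc_shift) simp
lemma T_nonneg: "0 \<le> T \<omega> n"
  unfolding T_def by (intro sum_nonneg) (simp add: less_imp_le hold_pos)
lemma T_strict_mono: "strict_mono (T \<omega>)"
  by (rule strict_monoI_Suc) (simp add: T_Suc hold_pos)
lemma T_less_iff[simp]: "T \<omega> m < T \<omega> n \<longleftrightarrow> m < n"
  using T_strict_mono strict_mono_less by blast
lemma T_le_iff[simp]: "T \<omega> m \<le> T \<omega> n \<longleftrightarrow> m \<le> n"
  using T_strict_mono strict_mono_less_eq by blast

lemma X_eq:
  assumes "T \<omega> n \<le> t" "t < T \<omega> (Suc n)"
  shows "X F c i \<omega> t = Z F i \<omega> n"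
proof -
  have "(LEAST m. t < T \<omega> (Suc m)) = n"
  proof (rule Least_equality)
    fix m assume "t < T \<omega> (Suc m)"
    with assms(1) have "T \<omega> n < T \<omega> (Suc m)" by linarith
    then show "n \<le> m" by simp
  qed (use assms in auto)
  then show ?thesis using assms unfolding X_def by auto
qed

lemma X_expl:
  assumes "\<forall>n. T \<omega> n \<le> t"
  shows "X F c i \<omega> t = c"
proof -
  have "\<not> (\<exists>n. T \<omega> n \<le> t \<and> t < T \<omega> (Suc n))" using assms by (meson not_less)
  then show ?thesis unfolding X_def by (rule if_not_P)
qed

lemma interval_exists:
  assumes "0 \<le> t" "t < T \<omega> m"
  shows "\<exists>n. T \<omega> n \<le> t \<and> t < T \<omega> (Suc n)"
proof -
  define n where "n = (LEAST n. t < T \<omega> n)"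
  have n1: "t < T \<omega> n" unfolding n_def by (rule LeastI[of _ m]) (rule assms)
  have "n \<noteq> 0" using n1 assms(1) by (metis T_0 not_less)
  then obtain k where k: "n = Suc k" by (cases n) auto
  have "\<not> t < T \<omega> k" using Least_le[of "\<lambda>n. t < T \<omega> n" k] unfolding n_def[symmetric] k by auto
  then show ?thesis using n1 k by (auto simp: not_less)
qed

lemma Z_Stream: "Z F i (x ## \<omega>) (Suc n) = Z F (F i (snd x)) \<omega> n" by simp

lemma Z_add: "Z F i \<omega> (n + m) = Z F (Z F i \<omega> n) (sdrop n \<omega>) m"
  by (induction n arbitrary: i \<omega>) auto

lemma Z_in: "(\<And>i u. i \<in> S \<Longrightarrow> F i u \<in> S) \<Longrightarrow> i \<in> S \<Longrightarrow> Z F i \<omega> n \<in> S"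
  by (induction n arbitrary: i \<omega>) auto

lemma Z_pair:
  "Z (\<lambda>(a, b) u. (F a u, G b u)) (i, j) \<omega> n = (Z F i \<omega> n, Z G j \<omega> n)"
  by (induction n arbitrary: i j \<omega>) auto

lemma T_shiftT:
  assumes "s < T \<omega> (Suc n)"
  shows "T (shiftT n s \<omega>) (Suc m) = T \<omega> (Suc n + m) - s"
proof (induction m)
  case 0
  then show ?case using assms by (simp add: shiftT_def T_Stream hold_def)
next
  case (Suc m)
  have "T (shiftT n s \<omega>) (Suc (Suc m)) = T (shiftT n s \<omega>) (Suc m) + hold (fst (shiftT n s \<omega> !! Suc m))"
    by (rule T_Suc)
  also have "shiftT n s \<omega> !! Suc m = \<omega> !! (Suc n + m)"
    by (simp add: shiftT_def sdrop_snth)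
  finally show ?case using Suc by (simp add: T_Suc)
qed

lemma Z_shiftT: "Z F (Z F i \<omega> n) (shiftT n s \<omega>) m = Z F i \<omega> (n + m)"
proof (cases m)
  case 0 then show ?thesis by simp
next
  case (Suc k)
  have "Z F i \<omega> (n + m) = Z F (Z F i \<omega> n) (sdrop n \<omega>) (Suc k)" using Suc by (simp only: Z_add)
  also have "\<dots> = Z F (F (Z F i \<omega> n) (snd (shd (sdrop n \<omega>)))) (stl (sdrop n \<omega>)) k"
    by (rule Z.simps(2))
  also have "\<dots> = Z F (F (Z F i \<omega> n) (snd (\<omega> !! n))) (sdrop (Suc n) \<omega>) k"
    by (simp only: sdrop_simps sdrop.simps)
  also have "\<dots> = Z F (Z F i \<omega> n) (shiftT n s \<omega>) (Suc k)"
    by (simp only: Z.simps shiftT_def stream.sel snd_conv)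
  finally show ?thesis using Suc by simp
qed

lemma X_shift:
  assumes t: "0 \<le> t" and n: "T \<omega> n \<le> s" "s < T \<omega> (Suc n)"
  shows "X F c i \<omega> (s + t) = X F c (Z F i \<omega> n) (shiftT n s \<omega>) t"
proof (cases "\<exists>m. T \<omega> m \<le> s + t \<and> s + t < T \<omega> (Suc m)")
  case True
  then obtain m where m: "T \<omega> m \<le> s + t" "s + t < T \<omega> (Suc m)" by blast
  have "n \<le> m"
  proof (rule ccontr)
    assume "\<not> n \<le> m"
    then have "T \<omega> (Suc m) \<le> T \<omega> n" by simp
    then show False using m n t by linarith
  qed
  then obtain k where k: "m = n + k" using le_Suc_ex by blast
  have lhs: "X F c i \<omega> (s + t) = Z F i \<omega> m" by (rule X_eq[OF m])
  show ?thesis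
  proof (cases k)
    case 0
    have "X F c (Z F i \<omega> n) (shiftT n s \<omega>) t = Z F (Z F i \<omega> n) (shiftT n s \<omega>) 0"
      by (rule X_eq) (use t m k 0 T_shiftT[OF n(2), of 0] in auto)
    then show ?thesis using lhs k 0 by simp
  next
    case (Suc k')
    have "X F c (Z F i \<omega> n) (shiftT n s \<omega>) t = Z F (Z F i \<omega> n) (shiftT n s \<omega>) (Suc k')"
      by (rule X_eq) (use t m k Suc T_shiftT[OF n(2), of k'] T_shiftT[OF n(2), of "Suc k'"] in auto)
    then show ?thesis using lhs k Suc Z_shiftT[of F i \<omega> n s "Suc k'"] by (simp del: Z.simps)
  qed
next
  case False
  have "\<not> (\<exists>k. T (shiftT n s \<omega>) k \<le> t \<and> t < T (shiftT n s \<omega>) (Suc k))"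
  proof
    assume "\<exists>k. T (shiftT n s \<omega>) k \<le> t \<and> t < T (shiftT n s \<omega>) (Suc k)"
    then obtain k where k: "T (shiftT n s \<omega>) k \<le> t" "t < T (shiftT n s \<omega>) (Suc k)" by blast
    have "T \<omega> (n + k) \<le> s + t"
    proof (cases k)
      case 0 then show ?thesis using n t by simp
    next
      case (Suc k') then show ?thesis using k T_shiftT[OF n(2), of k'] by simp
    qed
    moreover have "s + t < T \<omega> (Suc (n + k))" using k T_shiftT[OF n(2), of k] by simp
    ultimately show False using False by blast
  qed
  then have "X F c (Z F i \<omega> n) (shiftT n s \<omega>) t = c" unfolding X_def by (rule if_not_P)
  moreover have "X F c i \<omega> (s + t) = c" unfolding X_def using False by (rule if_not_P)
  ultimately show ?thesis by simp
qed

lemma X_0: "X F c i \<omega> 0 = i"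
  using X_eq[of \<omega> 0 0] by (simp add: T_Suc hold_pos)

lemma X_right_const:
  assumes "0 \<le> t"
  shows "\<exists>e>0. \<forall>s. t \<le> s \<and> s < t + e \<longrightarrow> X F c i \<omega> s = X F c i \<omega> t"
proof (cases "\<exists>n. T \<omega> n \<le> t \<and> t < T \<omega> (Suc n)")
  case True
  then obtain n where n: "T \<omega> n \<le> t" "t < T \<omega> (Suc n)" by blast
  show ?thesis
  proof (rule exI[of _ "T \<omega> (Suc n) - t"], intro conjI allI impI)
    fix s assume "t \<le> s \<and> s < t + (T \<omega> (Suc n) - t)"
    then have "X F c i \<omega> s = Z F i \<omega> n" using n by (intro X_eq) auto
    then show "X F c i \<omega> s = X F c i \<omega> t" using X_eq[OF n, of F c i] by simp
  qed (use n in simp)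
next
  case False
  then have "\<forall>n. T \<omega> n \<le> t" using interval_exists[OF assms] by (meson not_less)
  then have "\<forall>s. t \<le> s \<longrightarrow> (\<forall>n. T \<omega> n \<le> s)" by (meson order_trans)
  then show ?thesis using X_expl[of \<omega> _ F c i] by (intro exI[of _ 1]) auto
qed

lemma X_in: "(\<And>i u. i \<in> S \<Longrightarrow> F i u \<in> S) \<Longrightarrow> i \<in> S \<Longrightarrow> c \<in> S \<Longrightarrow> X F c i \<omega> t \<in> S"
  unfolding X_def using Z_in[of S F] by auto

lemma X_pair:
  "X (\<lambda>(a, b) u. (F a u, G b u)) (c, c') (i, j) \<omega> t = (X F c i \<omega> t, X G c' j \<omega> t)"
proof (cases "\<exists>n. T \<omega> n \<le> t \<and> t < T \<omega> (Suc n)")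
  case True
  then show ?thesis unfolding X_def by (simp only: if_P[OF True] Z_pair if_True)
next
  case False
  then show ?thesis unfolding X_def by (simp only: if_not_P[OF False] if_False)
qed

lemma T_measurable[measurable]: "(\<lambda>\<omega>. T \<omega> n) \<in> borel_measurable (SS l)"
  unfolding T_def by measurable

lemma Z_measurable[measurable]:
  fixes F :: "'a::countable \<Rightarrow> real \<Rightarrow> 'a"
  assumes [measurable]: "\<And>i. F i \<in> measurable borel (count_space UNIV)"
  shows "(\<lambda>\<omega>. Z F i \<omega> n) \<in> measurable (SS l) (count_space UNIV)"
proof (induction n arbitrary: i)
  case 0 then show ?case by simp
next
  case (Suc n)
  have g: "(\<lambda>\<omega>. F i (snd (shd \<omega>))) \<in> measurable (SS l) (count_space UNIV)"
    by measurable
  have "(\<lambda>\<omega>. Z F (F i (snd (shd \<omega>))) (stl \<omega>) n) \<in> measurable (SS l) (count_space UNIV)"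
    by (rule measurable_compose_countable[OF _ g]) (rule measurable_compose[OF _ Suc], unfold SS_def, measurable)
  then show ?case by simp
qed

lemma X_measurable[measurable]:
  fixes F :: "'a::countable \<Rightarrow> real \<Rightarrow> 'a"
  assumes [measurable]: "\<And>i. F i \<in> measurable borel (count_space UNIV)"
  shows "(\<lambda>\<omega>. X F c i \<omega> t) \<in> measurable (SS l) (count_space UNIV)"
  unfolding X_def by measurable

lemma shiftT_measurable[measurable]: "shiftT n s \<in> measurable (SS l) (SS l)"
  unfolding shiftT_def by measurable


definition Ev :: "('a \<Rightarrow> real \<Rightarrow> 'a) \<Rightarrow> 'a \<Rightarrow> nat \<Rightarrow> 'a \<Rightarrow> real \<Rightarrow> (real \<times> real) stream set \<Rightarrow> (real \<times> real) stream set" where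
  "Ev F k n i t C = {\<omega>. T \<omega> n \<le> t \<and> t < T \<omega> (Suc n) \<and> Z F i \<omega> n = k \<and> shiftT n t \<omega> \<in> C}"

lemma shiftT_measurable2[measurable (raw)]:
  assumes [measurable]: "f \<in> borel_measurable N" "g \<in> measurable N (SS l)"
  shows "(\<lambda>x. shiftT n (f x) (g x)) \<in> measurable N (SS l)"
proof -
  have "(\<lambda>p. shiftT n (fst p) (snd p)) \<in> measurable (borel \<Otimes>\<^sub>M SS l) (SS l)"
    unfolding shiftT_def SS_def by measurable
  from measurable_compose[OF measurable_Pair[OF assms] this] show ?thesis by simp
qed

lemma Ev_measurable[measurable]:
  fixes F :: "'a::countable \<Rightarrow> real \<Rightarrow> 'a"
  assumes [measurable]: "\<And>i. F i \<in> measurable borel (count_space UNIV)" "C \<in> sets (SS l)"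
  shows "Ev F k n i t C \<in> sets (SS l)"
proof -
  have "Ev F k n i t C = {\<omega>\<in>space (SS l). T \<omega> n \<le> t \<and> t < T \<omega> (Suc n) \<and> Z F i \<omega> n = k \<and> shiftT n t \<omega> \<in> C}"
    by (simp add: Ev_def)
  also have "\<dots> \<in> sets (SS l)" by measurable
  finally show ?thesis .
qed

lemma Ev_Stream_0:
  assumes "0 \<le> t"
  shows "indicator (Ev F k 0 i t C) (x ## \<omega>) =
   (indicator {t<..} (hold (fst x)) * indicator {k} i * indicator C ((hold (fst x) - t, snd x) ## \<omega>) :: ennreal)"
proof -
  have "shiftT 0 t (x ## \<omega>) = (hold (fst x) - t, snd x) ## \<omega>"
    by (simp add: shiftT_def T_Stream)
  moreover have "T (x ## \<omega>) (Suc 0) = hold (fst x)" using T_Stream[of x \<omega> 0] by simp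
  ultimately show ?thesis using assms by (auto simp: Ev_def split: split_indicator)
qed

lemma Ev_Stream_Suc:
  "indicator (Ev F k (Suc n) i t C) (x ## \<omega>) =
   (indicator {..t} (hold (fst x)) * indicator (Ev F k n (F i (snd x)) (t - hold (fst x)) C) \<omega> :: ennreal)"
proof -
  have "shiftT (Suc n) t (x ## \<omega>) = shiftT n (t - hold (fst x)) \<omega>"
    by (simp add: shiftT_def T_Stream)
  moreover have "T (x ## \<omega>) (Suc n) = hold (fst x) + T \<omega> n" by (rule T_Stream)
  moreover have "T (x ## \<omega>) (Suc (Suc n)) = hold (fst x) + T \<omega> (Suc n)" by (rule T_Stream)
  moreover have "0 \<le> T \<omega> n" by (rule T_nonneg)
  ultimately show ?thesis by (auto simp: Ev_def split: split_indicator)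
qed

context ctmc_lam
begin

sublocale H: prob_space "muH lam" by (rule prob_space_muH)
sublocale U: prob_space muU by (rule prob_space_muU)
sublocale P: pair_prob_space "muH lam" muU ..
sublocale S: prob_space "SS lam" by (rule prob_space_SS)

lemma exp_integral:
  assumes g[measurable]: "g \<in> borel_measurable (borel \<Otimes>\<^sub>M borel)" and t: "0 \<le> t"
  shows "(\<integral>\<^sup>+x. indicator {t<..} (hold (fst x)) * g (hold (fst x) - t, snd x) \<partial>mu lam)
         = ennreal (exp (- lam * t)) * (\<integral>\<^sup>+x. g x \<partial>mu lam)"
proof -
  have "(\<integral>\<^sup>+x. indicator {t<..} (hold (fst x)) * g (hold (fst x) - t, snd x) \<partial>mu lam)
      = (\<integral>\<^sup>+b. \<integral>\<^sup>+a. indicator {t<..} (hold a) * g (hold a - t, b) \<partial>muH lam \<partial>muU)"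
    unfolding mu_def by (subst P.nn_integral_snd[symmetric]) auto
  also have "\<dots> = (\<integral>\<^sup>+b. ennreal (exp (- lam * t)) * \<integral>\<^sup>+a. g (a, b) \<partial>muH lam \<partial>muU)"
    by (intro nn_integral_cong memoryless t) measurable
  also have "\<dots> = ennreal (exp (- lam * t)) * (\<integral>\<^sup>+b. \<integral>\<^sup>+a. g (a, b) \<partial>muH lam \<partial>muU)"
    by (rule nn_integral_cmult) measurable
  also have "(\<integral>\<^sup>+b. \<integral>\<^sup>+a. g (a, b) \<partial>muH lam \<partial>muU) = (\<integral>\<^sup>+x. g x \<partial>mu lam)"
    unfolding mu_def by (subst P.nn_integral_snd) auto
  finally show ?thesis .
qed

lemma Ev_0:
  fixes F :: "'a::countable \<Rightarrow> real \<Rightarrow> 'a"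
  assumes [measurable]: "\<And>i. F i \<in> measurable borel (count_space UNIV)" "C \<in> sets (SS lam)"
    and t: "0 \<le> t"
  shows "emeasure (SS lam) (Ev F k 0 i t C) = indicator {k} i * ennreal (exp (- lam * t)) * emeasure (SS lam) C"
proof -
  have [measurable]: "C \<in> sets (stream_space (borel \<Otimes>\<^sub>M borel))" using assms(2) by (simp add: sets_SS)
  define G where "G y = (\<integral>\<^sup>+\<omega>. indicator C (y ## \<omega>) \<partial>SS lam)" for y
  have G[measurable]: "G \<in> borel_measurable (borel \<Otimes>\<^sub>M borel)"
    unfolding G_def by measurable
  have "emeasure (SS lam) (Ev F k 0 i t C) = (\<integral>\<^sup>+\<omega>. indicator (Ev F k 0 i t C) \<omega> \<partial>SS lam)"
    by simp
  also have "\<dots> = (\<integral>\<^sup>+x. \<integral>\<^sup>+\<omega>. indicator (Ev F k 0 i t C) (x ## \<omega>) \<partial>SS lam \<partial>mu lam)"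
    by (rule nn_integral_SS) measurable
  also have "\<dots> = (\<integral>\<^sup>+x. indicator {k} i * (indicator {t<..} (hold (fst x)) * G (hold (fst x) - t, snd x)) \<partial>mu lam)"
  proof (intro nn_integral_cong)
    fix x :: "real \<times> real"
    have "(\<integral>\<^sup>+\<omega>. indicator (Ev F k 0 i t C) (x ## \<omega>) \<partial>SS lam) =
        (\<integral>\<^sup>+\<omega>. (indicator {k} i * indicator {t<..} (hold (fst x))) * indicator C ((hold (fst x) - t, snd x) ## \<omega>) \<partial>SS lam)"
      unfolding Ev_Stream_0[OF t] by (simp add: ac_simps)
    also have "\<dots> = (indicator {k} i * indicator {t<..} (hold (fst x))) * G (hold (fst x) - t, snd x)"
      unfolding G_def by (rule nn_integral_cmult) measurable
    finally show "(\<integral>\<^sup>+\<omega>. indicator (Ev F k 0 i t C) (x ## \<omega>) \<partial>SS lam) =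
        indicator {k} i * (indicator {t<..} (hold (fst x)) * G (hold (fst x) - t, snd x))"
      by (simp add: mult.assoc)
  qed
  also have "\<dots> = indicator {k} i * (\<integral>\<^sup>+x. indicator {t<..} (hold (fst x)) * G (hold (fst x) - t, snd x) \<partial>mu lam)"
    by (rule nn_integral_cmult) measurable
  also have "\<dots> = indicator {k} i * (ennreal (exp (- lam * t)) * (\<integral>\<^sup>+x. G x \<partial>mu lam))"
    by (subst exp_integral[OF G t]) simp
  also have "(\<integral>\<^sup>+x. G x \<partial>mu lam) = emeasure (SS lam) C"
  proof -
    have "emeasure (SS lam) C = (\<integral>\<^sup>+\<omega>. indicator C \<omega> \<partial>SS lam)" using assms(2) by simp
    also have "\<dots> = (\<integral>\<^sup>+x. G x \<partial>mu lam)" unfolding G_def by (rule nn_integral_SS) (use assms(2) in measurable)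
    finally show ?thesis by simp
  qed
  finally show ?thesis by (simp add: mult.assoc)
qed

lemma Ev_Suc:
  fixes F :: "'a::countable \<Rightarrow> real \<Rightarrow> 'a"
  assumes [measurable]: "\<And>i. F i \<in> measurable borel (count_space UNIV)" "C \<in> sets (SS lam)"
  shows "emeasure (SS lam) (Ev F k (Suc n) i t C) =
    (\<integral>\<^sup>+x. indicator {..t} (hold (fst x)) * emeasure (SS lam) (Ev F k n (F i (snd x)) (t - hold (fst x)) C) \<partial>mu lam)"
proof -
  have "emeasure (SS lam) (Ev F k (Suc n) i t C) = (\<integral>\<^sup>+\<omega>. indicator (Ev F k (Suc n) i t C) \<omega> \<partial>SS lam)"
    by simp
  also have "\<dots> = (\<integral>\<^sup>+x. \<integral>\<^sup>+\<omega>. indicator (Ev F k (Suc n) i t C) (x ## \<omega>) \<partial>SS lam \<partial>mu lam)"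
    by (rule nn_integral_SS) measurable
  also have "\<dots> = (\<integral>\<^sup>+x. indicator {..t} (hold (fst x)) * emeasure (SS lam) (Ev F k n (F i (snd x)) (t - hold (fst x)) C) \<partial>mu lam)"
    unfolding Ev_Stream_Suc
    by (intro nn_integral_cong nn_integral_cmult_indicator) measurable
  finally show ?thesis .
qed

lemma markov_Ev:
  fixes F :: "'a::countable \<Rightarrow> real \<Rightarrow> 'a"
  assumes F[measurable]: "\<And>i. F i \<in> measurable borel (count_space UNIV)" and C[measurable]: "C \<in> sets (SS lam)"
    and t: "0 \<le> t"
  shows "emeasure (SS lam) (Ev F k n i t C) = emeasure (SS lam) (Ev F k n i t UNIV) * emeasure (SS lam) C"
  using t
proof (induction n arbitrary: i t)
  case 0
  have U: "UNIV \<in> sets (SS lam)" using sets.top[of "SS lam"] by simp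
  show ?case using Ev_0[OF F C 0(1)] Ev_0[OF F U 0(1)] S.emeasure_space_1 by simp
next
  case (Suc n)
  have U[measurable]: "UNIV \<in> sets (SS lam)" using sets.top[of "SS lam"] by simp
  have "emeasure (SS lam) (Ev F k (Suc n) i t C) =
    (\<integral>\<^sup>+x. indicator {..t} (hold (fst x)) * emeasure (SS lam) (Ev F k n (F i (snd x)) (t - hold (fst x)) C) \<partial>mu lam)"
    by (rule Ev_Suc[OF F C])
  also have "\<dots> = (\<integral>\<^sup>+x. indicator {..t} (hold (fst x)) * emeasure (SS lam) (Ev F k n (F i (snd x)) (t - hold (fst x)) UNIV) * emeasure (SS lam) C \<partial>mu lam)"
    by (intro nn_integral_cong) (auto simp: Suc.IH mult.assoc split: split_indicator)
  also have "\<dots> = (\<integral>\<^sup>+x. indicator {..t} (hold (fst x)) * emeasure (SS lam) (Ev F k n (F i (snd x)) (t - hold (fst x)) UNIV) \<partial>mu lam) * emeasure (SS lam) C"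
  proof (rule nn_integral_multc)
    have "(\<lambda>x. \<integral>\<^sup>+\<omega>. indicator (Ev F k (Suc n) i t UNIV) (x ## \<omega>) \<partial>SS lam) \<in> borel_measurable (mu lam)"
      by measurable
    then show "(\<lambda>x. indicator {..t} (hold (fst x)) * emeasure (SS lam) (Ev F k n (F i (snd x)) (t - hold (fst x)) UNIV)) \<in> borel_measurable (mu lam)"
      unfolding Ev_Stream_Suc
      by (rule measurable_cong[THEN iffD1, rotated]) (rule nn_integral_cmult_indicator, measurable)
  qed
  also have "\<dots> = emeasure (SS lam) (Ev F k (Suc n) i t UNIV) * emeasure (SS lam) C"
    by (subst Ev_Suc[OF F U]) simp
  finally show ?case .
qed

end


context ctmc_lam
begin

definition aexp :: ennreal where
  "aexp = (\<integral>\<^sup>+x. ennreal (exp (- hold (fst x))) \<partial>mu lam)"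

lemma expT_integral: "(\<integral>\<^sup>+\<omega>. ennreal (exp (- T \<omega> n)) \<partial>SS lam) = aexp ^ n"
proof (induction n)
  case 0
  then show ?case using S.emeasure_space_1 by simp
next
  case (Suc n)
  have "(\<integral>\<^sup>+\<omega>. ennreal (exp (- T \<omega> (Suc n))) \<partial>SS lam)
     = (\<integral>\<^sup>+x. \<integral>\<^sup>+\<omega>. ennreal (exp (- T (x ## \<omega>) (Suc n))) \<partial>SS lam \<partial>mu lam)"
    by (rule nn_integral_SS) measurable
  also have "\<dots> = (\<integral>\<^sup>+x. ennreal (exp (- hold (fst x))) * (\<integral>\<^sup>+\<omega>. ennreal (exp (- T \<omega> n)) \<partial>SS lam) \<partial>mu lam)"
  proof (intro nn_integral_cong)
    fix x :: "real \<times> real"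
    have "(\<integral>\<^sup>+\<omega>. ennreal (exp (- T (x ## \<omega>) (Suc n))) \<partial>SS lam)
       = (\<integral>\<^sup>+\<omega>. ennreal (exp (- hold (fst x))) * ennreal (exp (- T \<omega> n)) \<partial>SS lam)"
      by (intro nn_integral_cong) (simp add: T_Stream exp_add[symmetric] ennreal_mult[symmetric])
    also have "\<dots> = ennreal (exp (- hold (fst x))) * (\<integral>\<^sup>+\<omega>. ennreal (exp (- T \<omega> n)) \<partial>SS lam)"
      by (rule nn_integral_cmult) measurable
    finally show "(\<integral>\<^sup>+\<omega>. ennreal (exp (- T (x ## \<omega>) (Suc n))) \<partial>SS lam) = \<dots>" .
  qed
  also have "\<dots> = aexp * aexp ^ n"
    unfolding aexp_def Suc.IH by (rule nn_integral_multc) measurable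
  finally show ?case by simp
qed

lemma aexp_bound: "aexp \<le> ennreal (1 - (1 - exp (- 1)) * exp (- lam))"
proof -
  define c where "c = 1 - exp (- 1::real)"
  have c: "0 \<le> c" unfolding c_def by simp
  have "aexp + ennreal (c * exp (- lam)) =
      (\<integral>\<^sup>+x. ennreal (exp (- hold (fst x))) \<partial>mu lam) + ennreal c * (\<integral>\<^sup>+x. indicator {1<..} (hold (fst x)) * 1 \<partial>mu lam)"
    unfolding aexp_def using exp_integral[of "\<lambda>_. 1" 1] P.emeasure_space_1 by (simp add: ennreal_mult c mu_def space_pair_measure)
  also have "\<dots> = (\<integral>\<^sup>+x. ennreal (exp (- hold (fst x))) + ennreal c * indicator {1<..} (hold (fst x)) \<partial>mu lam)"
    by (subst nn_integral_cmult[symmetric], measurable, subst nn_integral_add) auto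
  also have "\<dots> \<le> (\<integral>\<^sup>+x. 1 \<partial>mu lam)"
  proof (intro nn_integral_mono)
    fix x :: "real \<times> real"
    show "ennreal (exp (- hold (fst x))) + ennreal c * indicator {1<..} (hold (fst x)) \<le> 1"
    proof (cases "1 < hold (fst x)")
      case True
      then have "exp (- hold (fst x)) \<le> exp (- 1)" by simp
      then have "exp (- hold (fst x)) + c \<le> 1" unfolding c_def by simp
      then show ?thesis using True c by (simp add: ennreal_plus[symmetric] del: ennreal_plus)
    next
      case False
      then show ?thesis by (simp add: hold_pos less_imp_le)
    qed
  qed
  also have "\<dots> = 1" using P.emeasure_space_1 by (simp add: mu_def)
  finally have le1: "aexp + ennreal (c * exp (- lam)) \<le> 1" .
  then have "aexp \<noteq> \<infinity>" by (auto simp: top_unique)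
  then obtain ar where ar: "aexp = ennreal ar" "0 \<le> ar" by (cases aexp) auto
  with le1 have "ar + c * exp (- lam) \<le> 1" using c
    by (simp add: ennreal_plus[symmetric] ennreal_le_1 del: ennreal_plus)
  then show ?thesis using ar c_def by simp
qed

lemma expl_null: "AE \<omega> in SS lam. \<exists>n. s < T \<omega> n"
proof -
  define b where "b = 1 - (1 - exp (- 1)) * exp (- lam)"
  have b0: "0 \<le> b" unfolding b_def
  proof -
    have "(1 - exp (- 1)) * exp (- lam) \<le> 1 * 1"
      using lam_pos by (intro mult_mono) auto
    then show "0 \<le> 1 - (1 - exp (- 1)) * exp (- lam)" by simp
  qed
  have b1: "b < 1" unfolding b_def by simp
  define E where "E = {\<omega>\<in>space (SS lam). \<forall>n. T \<omega> n \<le> s}"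
  have E[measurable]: "E \<in> sets (SS lam)" unfolding E_def by measurable
  have bound: "measure (SS lam) E \<le> exp s * b ^ n" for n
  proof -
    have Tn: "{\<omega>\<in>space (SS lam). T \<omega> n \<le> s} \<in> sets (SS lam)"
    proof -
      have "{\<omega>\<in>space (SS lam). T \<omega> n \<le> s} = (\<lambda>\<omega>. T \<omega> n) -` {..s} \<inter> space (SS lam)" by auto
      also have "\<dots> \<in> sets (SS lam)" by (rule measurable_sets[OF T_measurable]) simp
      finally show ?thesis .
    qed
    have "emeasure (SS lam) E \<le> emeasure (SS lam) {\<omega>\<in>space (SS lam). T \<omega> n \<le> s}"
      by (rule emeasure_mono[OF _ Tn]) (auto simp: E_def)
    also have "\<dots> = (\<integral>\<^sup>+\<omega>. indicator {\<omega>\<in>space (SS lam). T \<omega> n \<le> s} \<omega> \<partial>SS lam)"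
    proof (rule nn_integral_indicator[symmetric])
      have "{\<omega>\<in>space (SS lam). T \<omega> n \<le> s} = (\<lambda>\<omega>. T \<omega> n) -` {..s} \<inter> space (SS lam)" by auto
      also have "\<dots> \<in> sets (SS lam)" by (rule measurable_sets[OF T_measurable]) simp
      finally show "{\<omega>\<in>space (SS lam). T \<omega> n \<le> s} \<in> sets (SS lam)" .
    qed
    also have "\<dots> \<le> (\<integral>\<^sup>+\<omega>. ennreal (exp s) * ennreal (exp (- T \<omega> n)) \<partial>SS lam)"
    proof (intro nn_integral_mono)
      fix \<omega>
      have "T \<omega> n \<le> s \<Longrightarrow> 1 \<le> exp s * exp (- T \<omega> n)"
        by (simp add: exp_add[symmetric])
      then show "indicator {\<omega> \<in> space (SS lam). T \<omega> n \<le> s} \<omega> \<le> ennreal (exp s) * ennreal (exp (- T \<omega> n))"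
        by (auto simp: ennreal_mult[symmetric] split: split_indicator)
    qed
    also have "\<dots> = ennreal (exp s) * aexp ^ n"
      by (subst nn_integral_cmult) (auto simp: expT_integral)
    also have "\<dots> \<le> ennreal (exp s) * ennreal b ^ n"
      using aexp_bound unfolding b_def by (intro mult_left_mono power_mono) auto
    also have "\<dots> = ennreal (exp s * b ^ n)"
      using b0 by (simp add: ennreal_mult ennreal_power)
    finally show ?thesis using b0 by (simp add: S.emeasure_eq_measure)
  qed
  have lim: "(\<lambda>n. exp s * b ^ n) \<longlonglongrightarrow> exp s * 0"
    by (intro tendsto_mult tendsto_const LIMSEQ_power_zero) (use b0 b1 in auto)
  have "measure (SS lam) E \<le> exp s * 0"
    by (rule LIMSEQ_le_const[OF lim]) (use bound in blast)
  then have "emeasure (SS lam) E = 0" by (simp add: S.emeasure_eq_measure measure_nonneg antisym)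
  then have "E \<in> null_sets (SS lam)" using E by (rule null_setsI)
  then show ?thesis
    by (rule AE_I') (auto simp: E_def not_less)
qed

end


lemma interval_unique:
  assumes "T \<omega> m \<le> s" "s < T \<omega> (Suc m)" "T \<omega> m' \<le> s" "s < T \<omega> (Suc m')"
  shows "m = m'"
proof -
  have "T \<omega> m < T \<omega> (Suc m')" "T \<omega> m' < T \<omega> (Suc m)" using assms by linarith+
  then have "m < Suc m'" "m' < Suc m" by simp_all
  then show ?thesis by simp
qed

lemma Ev_disjoint: "disjoint_family (\<lambda>m. Ev F k m i s C)"
  unfolding disjoint_family_on_def
proof (intro ballI impI)
  fix m m' :: nat assume "m \<noteq> m'"
  show "Ev F k m i s C \<inter> Ev F k m' i s C = {}"
  proof (rule ccontr)
    assume "Ev F k m i s C \<inter> Ev F k m' i s C \<noteq> {}"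
    then obtain \<omega> where "T \<omega> m \<le> s" "s < T \<omega> (Suc m)" "T \<omega> m' \<le> s" "s < T \<omega> (Suc m')"
      by (auto simp: Ev_def)
    then have "m = m'" by (rule interval_unique)
    then show False using \<open>m \<noteq> m'\<close> by simp
  qed
qed

context ctmc_lam
begin

lemma AE_union_Ev:
  assumes s: "0 \<le> s"
    and hA: "\<And>\<omega> m. T \<omega> m \<le> s \<Longrightarrow> s < T \<omega> (Suc m) \<Longrightarrow> (\<omega> \<in> A \<longleftrightarrow> Z F i \<omega> m = k \<and> shiftT m s \<omega> \<in> C)"
  shows "AE \<omega> in SS lam. \<omega> \<in> A \<longleftrightarrow> \<omega> \<in> (\<Union>m. Ev F k m i s C)"
  using expl_null[of s]
proof (rule eventually_mono)
  fix \<omega> assume "\<exists>n. s < T \<omega> n"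
  then obtain n where "s < T \<omega> n" by blast
  then obtain m where m: "T \<omega> m \<le> s" "s < T \<omega> (Suc m)" using interval_exists[OF s] by blast
  have 1: "\<omega> \<in> (\<Union>m'. Ev F k m' i s C) \<longleftrightarrow> \<omega> \<in> Ev F k m i s C"
  proof
    assume "\<omega> \<in> (\<Union>m'. Ev F k m' i s C)"
    then obtain m' where m': "\<omega> \<in> Ev F k m' i s C" by blast
    then have "m' = m" using m unfolding Ev_def by (blast intro: interval_unique)
    then show "\<omega> \<in> Ev F k m i s C" using m' by simp
  qed blast
  have 2: "\<omega> \<in> Ev F k m i s C \<longleftrightarrow> Z F i \<omega> m = k \<and> shiftT m s \<omega> \<in> C"
    using m unfolding Ev_def by blast
  show "\<omega> \<in> A \<longleftrightarrow> \<omega> \<in> (\<Union>m. Ev F k m i s C)"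
    unfolding 1 2 by (rule hA[OF m])
qed

lemma markov_event:
  fixes F :: "'a::countable \<Rightarrow> real \<Rightarrow> 'a"
  assumes F[measurable]: "\<And>i. F i \<in> measurable borel (count_space UNIV)"
    and C[measurable]: "C \<in> sets (SS lam)" and A[measurable]: "A \<in> sets (SS lam)" and s: "0 \<le> s"
    and hA: "\<And>\<omega> m. T \<omega> m \<le> s \<Longrightarrow> s < T \<omega> (Suc m) \<Longrightarrow> (\<omega> \<in> A \<longleftrightarrow> Z F i \<omega> m = k \<and> shiftT m s \<omega> \<in> C)"
  shows "emeasure (SS lam) A = emeasure (SS lam) {\<omega>. X F c i \<omega> s = k} * emeasure (SS lam) C"
proof -
  have U[measurable]: "UNIV \<in> sets (SS lam)" using sets.top[of "SS lam"] by simp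
  have Xk[measurable]: "{\<omega>. X F c i \<omega> s = k} \<in> sets (SS lam)"
  proof -
    have "{\<omega>. X F c i \<omega> s = k} = {\<omega>\<in>space (SS lam). X F c i \<omega> s = k}" by simp
    also have "\<dots> \<in> sets (SS lam)" by measurable
    finally show ?thesis .
  qed
  have "emeasure (SS lam) A = emeasure (SS lam) (\<Union>m. Ev F k m i s C)"
    by (rule emeasure_eq_AE[OF AE_union_Ev[OF s hA]]) auto
  also have "\<dots> = (\<Sum>m. emeasure (SS lam) (Ev F k m i s C))"
    by (rule suminf_emeasure[symmetric]) (auto intro: Ev_disjoint)
  also have "\<dots> = (\<Sum>m. emeasure (SS lam) (Ev F k m i s UNIV) * emeasure (SS lam) C)"
    by (intro suminf_cong markov_Ev F C s)
  also have "\<dots> = (\<Sum>m. emeasure (SS lam) (Ev F k m i s UNIV)) * emeasure (SS lam) C"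
    by (rule ennreal_suminf_multc)
  also have "(\<Sum>m. emeasure (SS lam) (Ev F k m i s UNIV)) = emeasure (SS lam) (\<Union>m. Ev F k m i s UNIV)"
    by (rule suminf_emeasure) (auto intro: Ev_disjoint)
  also have "\<dots> = emeasure (SS lam) {\<omega>. X F c i \<omega> s = k}"
  proof (rule emeasure_eq_AE[OF AE_union_Ev[OF s], symmetric])
    fix \<omega> m assume m: "T \<omega> m \<le> s" "s < T \<omega> (Suc m)"
    show "\<omega> \<in> {\<omega>. X F c i \<omega> s = k} \<longleftrightarrow> Z F i \<omega> m = k \<and> shiftT m s \<omega> \<in> UNIV"
      using X_eq[OF m, of F c i] by simp
  qed auto
  finally show ?thesis .
qed

definition pt :: "('a \<Rightarrow> real \<Rightarrow> 'a) \<Rightarrow> 'a \<Rightarrow> 'a \<Rightarrow> 'a \<Rightarrow> real \<Rightarrow> real" where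
  "pt F c i j t = measure (SS lam) {\<omega>. X F c i \<omega> t = j}"

lemma X_set_measurable[measurable]:
  fixes F :: "'a::countable \<Rightarrow> real \<Rightarrow> 'a"
  assumes [measurable]: "\<And>i. F i \<in> measurable borel (count_space UNIV)"
  shows "{\<omega>. X F c i \<omega> t = j} \<in> sets (SS lam)"
proof -
  have "{\<omega>. X F c i \<omega> t = j} = {\<omega>\<in>space (SS lam). X F c i \<omega> t = j}" by simp
  also have "\<dots> \<in> sets (SS lam)" by measurable
  finally show ?thesis .
qed

lemma markov_event_pt:
  fixes F :: "'a::countable \<Rightarrow> real \<Rightarrow> 'a"
  assumes F[measurable]: "\<And>i. F i \<in> measurable borel (count_space UNIV)"
    and C[measurable]: "C \<in> sets (SS lam)" and A[measurable]: "A \<in> sets (SS lam)" and s: "0 \<le> s"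
    and hA: "\<And>\<omega> m. T \<omega> m \<le> s \<Longrightarrow> s < T \<omega> (Suc m) \<Longrightarrow> (\<omega> \<in> A \<longleftrightarrow> Z F i \<omega> m = k \<and> shiftT m s \<omega> \<in> C)"
  shows "measure (SS lam) A = pt F c i k s * measure (SS lam) C"
  using markov_event[OF F C A s hA, of c]
  by (simp add: S.emeasure_eq_measure pt_def ennreal_mult'[symmetric] measure_nonneg)

lemma partition_has_sum:
  fixes g :: "(real \<times> real) stream \<Rightarrow> nat"
  assumes g[measurable]: "g \<in> measurable (SS lam) (count_space UNIV)" and B[measurable]: "B \<in> sets (SS lam)"
  shows "((\<lambda>j. measure (SS lam) {\<omega>\<in>B. g \<omega> = j}) has_sum measure (SS lam) B) UNIV"
proof (rule sums_nonneg_imp_has_sum)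
  have eq: "(\<Union>j. {\<omega>\<in>B. g \<omega> = j}) = B" by auto
  have "(\<lambda>j. measure (SS lam) {\<omega>\<in>B. g \<omega> = j}) sums measure (SS lam) (\<Union>j. {\<omega>\<in>B. g \<omega> = j})"
  proof (rule measure_UNION)
    show "range (\<lambda>j. {\<omega> \<in> B. g \<omega> = j}) \<subseteq> sets (SS lam)"
    proof safe
      fix j
      have "{\<omega> \<in> B. g \<omega> = j} = B \<inter> (g -` {j} \<inter> space (SS lam))" by auto
      also have "\<dots> \<in> sets (SS lam)" using measurable_sets[OF g, of "{j}"] by auto
      finally show "{\<omega> \<in> B. g \<omega> = j} \<in> sets (SS lam)" .
    qed
  qed (auto simp: disjoint_family_on_def)
  then show "(\<lambda>j. measure (SS lam) {\<omega>\<in>B. g \<omega> = j}) sums measure (SS lam) B" unfolding eq .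
qed auto

end


lemma all_le_Suc_split: "(\<forall>k\<le>Suc n. P k) \<longleftrightarrow> P 0 \<and> (\<forall>k\<le>n. P (Suc k))"
proof safe
  fix k assume "P 0" "\<forall>k\<le>n. P (Suc k)" "k \<le> Suc n"
  then show "P k" by (cases k) auto
qed auto

context ctmc_lam
begin

lemma pt_nonneg: "0 \<le> pt F c i j t"
  by (simp add: pt_def)

lemma pt_0: "pt F c i j 0 = (if i = j then 1 else 0)"
proof -
  have "{\<omega>. X F c i \<omega> 0 = j} = (if i = j then UNIV else {})" by (auto simp: X_0)
  then show ?thesis using S.prob_space by (simp add: pt_def)
qed

lemma pt_outside:
  assumes "\<And>i u. i \<in> S \<Longrightarrow> F i u \<in> S" "i \<in> S" "c \<in> S" "j \<notin> S"
  shows "pt F c i j t = 0"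
proof -
  have "{\<omega>. X F c i \<omega> t = j} = {}" using X_in[of S F i c] assms by blast
  then show ?thesis by (simp add: pt_def)
qed

lemma has_sum_to_S:
  assumes "(f has_sum a) (UNIV :: nat set)" "\<And>j. j \<notin> S \<Longrightarrow> f j = 0"
  shows "(f has_sum a) S"
  using assms(1) by (subst has_sum_cong_neutral[of UNIV S f f]) (use assms(2) in auto)

lemma pt_rowsum:
  fixes F :: "nat \<Rightarrow> real \<Rightarrow> nat"
  assumes F[measurable]: "\<And>i. F i \<in> measurable borel (count_space UNIV)"
    and FS: "\<And>i u. i \<in> S \<Longrightarrow> F i u \<in> S" and i: "i \<in> S" and c: "c \<in> S"
  shows "((\<lambda>j. pt F c i j t) has_sum 1) S"
proof (rule has_sum_to_S)
  have U[measurable]: "UNIV \<in> sets (SS lam)" using sets.top[of "SS lam"] by simp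
  have "((\<lambda>j. measure (SS lam) {\<omega>\<in>UNIV. X F c i \<omega> t = j}) has_sum measure (SS lam) UNIV) UNIV"
    by (rule partition_has_sum) measurable
  then show "((\<lambda>j. pt F c i j t) has_sum 1) UNIV"
    using S.prob_space by (simp add: pt_def)
qed (use pt_outside[OF FS i c] in auto)

lemma pt_CK:
  fixes F :: "nat \<Rightarrow> real \<Rightarrow> nat"
  assumes F[measurable]: "\<And>i. F i \<in> measurable borel (count_space UNIV)"
    and FS: "\<And>i u. i \<in> S \<Longrightarrow> F i u \<in> S" and i: "i \<in> S" and c: "c \<in> S"
    and s: "0 \<le> s" and t: "0 \<le> t"
  shows "((\<lambda>k. pt F c i k s * pt F c k j t) has_sum pt F c i j (s + t)) S"
proof (rule has_sum_to_S)
  define B where "B = {\<omega>. X F c i \<omega> (s + t) = j}"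
  have B[measurable]: "B \<in> sets (SS lam)" unfolding B_def by measurable
  have "((\<lambda>k. measure (SS lam) {\<omega>\<in>B. X F c i \<omega> s = k}) has_sum measure (SS lam) B) UNIV"
    by (rule partition_has_sum) measurable
  moreover have "measure (SS lam) {\<omega>\<in>B. X F c i \<omega> s = k} = pt F c i k s * pt F c k j t" for k
  proof -
    have A: "{\<omega>\<in>B. X F c i \<omega> s = k} \<in> sets (SS lam)"
    proof -
      have "{\<omega>\<in>B. X F c i \<omega> s = k} = B \<inter> {\<omega>. X F c i \<omega> s = k}" by auto
      also have "\<dots> \<in> sets (SS lam)" by measurable
      finally show ?thesis .
    qed
    have "measure (SS lam) {\<omega>\<in>B. X F c i \<omega> s = k} = pt F c i k s * measure (SS lam) {\<omega>. X F c k \<omega> t = j}"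
    proof (rule markov_event_pt[OF F _ A s])
      fix \<omega> m assume m: "T \<omega> m \<le> s" "s < T \<omega> (Suc m)"
      show "\<omega> \<in> {\<omega>\<in>B. X F c i \<omega> s = k} \<longleftrightarrow> Z F i \<omega> m = k \<and> shiftT m s \<omega> \<in> {\<omega>. X F c k \<omega> t = j}"
        using X_eq[OF m, of F c i] X_shift[OF t m, of F c i] by (auto simp: B_def)
    qed measurable
    then show ?thesis by (simp add: pt_def)
  qed
  ultimately show "((\<lambda>k. pt F c i k s * pt F c k j t) has_sum pt F c i j (s + t)) UNIV"
    by (simp add: B_def pt_def)
qed (use pt_outside[OF FS i c] in auto)

lemma fd:
  fixes F :: "'a::countable \<Rightarrow> real \<Rightarrow> 'a"
  assumes F[measurable]: "\<And>i. F i \<in> measurable borel (count_space UNIV)"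
  shows "ts 0 = 0 \<Longrightarrow> (\<forall>k<n. ts k < ts (Suc k)) \<Longrightarrow>
    measure (SS lam) {\<omega>. \<forall>k\<le>n. X F c i \<omega> (ts k) = js k} =
      (if js 0 = i then 1 else 0) * (\<Prod>k<n. pt F c (js k) (js (Suc k)) (ts (Suc k) - ts k))"
proof (induction n arbitrary: i ts js)
  case 0
  have "{\<omega>. \<forall>k\<le>0. X F c i \<omega> (ts k) = js k} = (if js 0 = i then UNIV else {})"
    using 0 by (auto simp: X_0)
  then show ?case using S.prob_space by simp
next
  case (Suc n)
  have mono: "ts k \<le> ts k'" if "k \<le> k'" "k' \<le> Suc n" for k k'
    using that
  proof (induction k' rule: dec_induct)
    case (step m) then show ?case using Suc.prems(2)[rule_format, of m] by simp
  qed simp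
  define s where "s = ts 1"
  have s: "0 \<le> s" using mono[of 0 1] Suc.prems(1) by (simp add: s_def)
  define ts' where "ts' k = ts (Suc k) - s" for k
  define js' where "js' k = js (Suc k)" for k
  define C where "C = {\<omega>. \<forall>k\<le>n. X F c (js 1) \<omega> (ts' k) = js' k}"
  have C[measurable]: "C \<in> sets (SS lam)"
  proof -
    have "C = {\<omega>\<in>space (SS lam). \<forall>k\<le>n. X F c (js 1) \<omega> (ts' k) = js' k}" by (simp add: C_def)
    also have "\<dots> \<in> sets (SS lam)" by measurable
    finally show ?thesis .
  qed
  have IH: "measure (SS lam) C = (\<Prod>k<n. pt F c (js' k) (js' (Suc k)) (ts' (Suc k) - ts' k))"
    unfolding C_def by (subst Suc.IH) (use Suc.prems in \<open>auto simp: ts'_def js'_def s_def\<close>)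
  show ?case
  proof (cases "js 0 = i")
    case False
    then have E: "{\<omega>. \<forall>k\<le>Suc n. X F c i \<omega> (ts k) = js k} = {}"
      using Suc.prems(1) by (auto simp: X_0 dest: spec[of _ 0])
    show ?thesis using False by (subst E) simp
  next
    case True
    define A where "A = {\<omega>. \<forall>k\<le>Suc n. X F c i \<omega> (ts k) = js k}"
    have A[measurable]: "A \<in> sets (SS lam)"
    proof -
      have "A = {\<omega>\<in>space (SS lam). \<forall>k\<le>Suc n. X F c i \<omega> (ts k) = js k}" by (simp add: A_def)
      also have "\<dots> \<in> sets (SS lam)" by measurable
      finally show ?thesis .
    qed
    have "measure (SS lam) A = pt F c i (js 1) s * measure (SS lam) C"
    proof (rule markov_event_pt[OF F C A s])
      fix \<omega> m assume m: "T \<omega> m \<le> s" "s < T \<omega> (Suc m)"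
      have eq: "X F c i \<omega> (ts (Suc k)) = X F c (Z F i \<omega> m) (shiftT m s \<omega>) (ts' k)" if "k \<le> n" for k
      proof -
        have "0 \<le> ts' k" using mono[of 1 "Suc k"] that by (simp add: ts'_def s_def)
        from X_shift[OF this m, of F c i] show ?thesis by (simp add: ts'_def)
      qed
      have "\<omega> \<in> A \<longleftrightarrow> (\<forall>k\<le>n. X F c i \<omega> (ts (Suc k)) = js (Suc k))"
        unfolding A_def using True Suc.prems(1) by (auto simp: X_0 all_le_Suc_split)
      also have "\<dots> \<longleftrightarrow> Z F i \<omega> m = js 1 \<and> (\<forall>k\<le>n. X F c (js 1) (shiftT m s \<omega>) (ts' k) = js' k)"
      proof -
        have "ts' 0 = 0" by (simp add: ts'_def s_def)
        then have z: "X F c (Z F i \<omega> m) (shiftT m s \<omega>) (ts' 0) = Z F i \<omega> m" by (simp add: X_0)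
        show ?thesis using eq z by (auto simp: js'_def)
      qed
      finally show "\<omega> \<in> A \<longleftrightarrow> Z F i \<omega> m = js 1 \<and> shiftT m s \<omega> \<in> C" by (simp add: C_def)
    qed
    also have "\<dots> = (if js 0 = i then 1 else 0) * (\<Prod>k<Suc n. pt F c (js k) (js (Suc k)) (ts (Suc k) - ts k))"
      unfolding IH using True Suc.prems(1)
      by (subst prod.lessThan_Suc_shift) (simp add: ts'_def js'_def s_def)
    finally show ?thesis by (simp add: A_def)
  qed
qed

end


lemma T_1: "T \<omega> (Suc 0) = hold (fst (shd \<omega>))"
  by (simp add: T_def)
lemma T_2: "T \<omega> (Suc (Suc 0)) = hold (fst (shd \<omega>)) + hold (fst (shd (stl \<omega>)))"
  by (simp add: T_def)

lemma X_before1: "0 \<le> t \<Longrightarrow> t < hold (fst (shd \<omega>)) \<Longrightarrow> X F c i \<omega> t = i"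
  using X_eq[of \<omega> 0 t F c i] by (simp add: T_1)

lemma X_between:
  "hold (fst (shd \<omega>)) \<le> t \<Longrightarrow> \<not> hold (fst (shd \<omega>)) + hold (fst (shd (stl \<omega>))) \<le> t \<Longrightarrow>
   X F c i \<omega> t = F i (snd (shd \<omega>))"
  using X_eq[of \<omega> 1 t F c i] by (simp add: T_1 T_2)

context ctmc_lam
begin

definition qq :: "real \<Rightarrow> real" where "qq t = 1 - exp (- lam * t)"

lemma qq_nonneg: "0 \<le> t \<Longrightarrow> 0 \<le> qq t"
  unfolding qq_def using lam_pos by simp

lemma qq_le: "qq t \<le> lam * t"
  unfolding qq_def using exp_ge_add_one_self[of "- lam * t"] by simp

lemma qq_le1: "qq t \<le> 1"
  unfolding qq_def by simp

lemma muH_gt: "0 \<le> t \<Longrightarrow> measure (muH lam) {a. t < hold a} = exp (- lam * t)"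
proof -
  assume t: "0 \<le> t"
  have "{a. t < hold a} \<in> sets (muH lam)" by measurable
  then have "emeasure (muH lam) {a. t < hold a} = (\<integral>\<^sup>+a. indicator {a. t < hold a} a \<partial>muH lam)"
    by simp
  also have "\<dots> = (\<integral>\<^sup>+a. indicator {t<..} (hold a) * 1 \<partial>muH lam)"
    by (intro nn_integral_cong) (simp split: split_indicator)
  also have "\<dots> = ennreal (exp (- lam * t))"
    using memoryless[of "\<lambda>_. 1" t] t H.emeasure_space_1 by simp
  finally show ?thesis by (simp add: H.emeasure_eq_measure)
qed

lemma muH_le: "0 \<le> t \<Longrightarrow> measure (muH lam) {a. hold a \<le> t} = qq t"
proof -
  assume t: "0 \<le> t"
  have "{a. hold a \<le> t} = space (muH lam) - {a. t < hold a}" by auto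
  moreover have "{a. t < hold a} \<in> sets (muH lam)" by measurable
  ultimately show ?thesis using H.prob_compl[of "{a. t < hold a}"] muH_gt[OF t] by (simp add: qq_def)
qed

lemma mu_rect:
  assumes t: "0 \<le> t" and B: "B \<in> sets borel"
  shows "measure (mu lam) ({a. hold a \<le> t} \<times> B) = qq t * measure muU B"
proof -
  have "emeasure (mu lam) ({a. hold a \<le> t} \<times> B) = emeasure (muH lam) {a. hold a \<le> t} * emeasure muU B"
    unfolding mu_def by (rule U.emeasure_pair_measure_Times) (use B in auto)
  then show ?thesis using muH_le[OF t] qq_nonneg[OF t]
    by (simp add: H.emeasure_eq_measure U.emeasure_eq_measure P.emeasure_eq_measure ennreal_mult'[symmetric] mu_def)
qed

lemma shd_emeasure:
  assumes D[measurable]: "D \<in> sets (borel \<Otimes>\<^sub>M borel)"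
  shows "emeasure (SS lam) {\<omega>. shd \<omega> \<in> D} = emeasure (mu lam) D"
proof -
  have S: "{\<omega>. shd \<omega> \<in> D} = {\<omega>\<in>space (SS lam). shd \<omega> \<in> D}" by simp
  have [measurable]: "{\<omega>\<in>space (SS lam). shd \<omega> \<in> D} \<in> sets (SS lam)" unfolding SS_def by measurable
  have "emeasure (SS lam) {\<omega>. shd \<omega> \<in> D} = (\<integral>\<^sup>+\<omega>. indicator {\<omega>\<in>space (SS lam). shd \<omega> \<in> D} \<omega> \<partial>SS lam)"
    unfolding S by (rule nn_integral_indicator[symmetric]) measurable
  also have "\<dots> = (\<integral>\<^sup>+x. \<integral>\<^sup>+\<omega>. indicator {\<omega>\<in>space (SS lam). shd \<omega> \<in> D} (x ## \<omega>) \<partial>SS lam \<partial>mu lam)"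
    by (rule nn_integral_SS) measurable
  also have "\<dots> = (\<integral>\<^sup>+x. indicator D x \<partial>mu lam)"
    using S.emeasure_space_1 by (intro nn_integral_cong) (simp split: split_indicator)
  also have "\<dots> = emeasure (mu lam) D" by (rule nn_integral_indicator) simp
  finally show ?thesis .
qed

lemma shd2_emeasure:
  assumes D[measurable]: "D \<in> sets (borel \<Otimes>\<^sub>M borel)"
  shows "emeasure (SS lam) {\<omega>. shd \<omega> \<in> D \<and> shd (stl \<omega>) \<in> D} = emeasure (mu lam) D * emeasure (mu lam) D"
proof -
  have S: "{\<omega>. shd \<omega> \<in> D \<and> shd (stl \<omega>) \<in> D} = {\<omega>\<in>space (SS lam). shd \<omega> \<in> D \<and> shd (stl \<omega>) \<in> D}" by simp
  have [measurable]: "{\<omega>\<in>space (SS lam). shd \<omega> \<in> D \<and> shd (stl \<omega>) \<in> D} \<in> sets (SS lam)" unfolding SS_def by measurable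
  have [measurable]: "{\<omega>\<in>space (SS lam). shd \<omega> \<in> D} \<in> sets (SS lam)" unfolding SS_def by measurable
  have "emeasure (SS lam) {\<omega>. shd \<omega> \<in> D \<and> shd (stl \<omega>) \<in> D} = (\<integral>\<^sup>+\<omega>. indicator {\<omega>\<in>space (SS lam). shd \<omega> \<in> D \<and> shd (stl \<omega>) \<in> D} \<omega> \<partial>SS lam)"
    unfolding S by (rule nn_integral_indicator[symmetric]) measurable
  also have "\<dots> = (\<integral>\<^sup>+x. \<integral>\<^sup>+\<omega>. indicator {\<omega>\<in>space (SS lam). shd \<omega> \<in> D \<and> shd (stl \<omega>) \<in> D} (x ## \<omega>) \<partial>SS lam \<partial>mu lam)"
    by (rule nn_integral_SS) measurable
  also have "\<dots> = (\<integral>\<^sup>+x. indicator D x * emeasure (SS lam) {\<omega>\<in>space (SS lam). shd \<omega> \<in> D} \<partial>mu lam)"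
  proof (intro nn_integral_cong)
    fix x :: "real \<times> real"
    have "(\<integral>\<^sup>+\<omega>. indicator {\<omega>\<in>space (SS lam). shd \<omega> \<in> D \<and> shd (stl \<omega>) \<in> D} (x ## \<omega>) \<partial>SS lam)
        = (\<integral>\<^sup>+\<omega>. indicator D x * indicator {\<omega>\<in>space (SS lam). shd \<omega> \<in> D} \<omega> \<partial>SS lam)"
      by (intro nn_integral_cong) (simp split: split_indicator)
    also have "\<dots> = indicator D x * emeasure (SS lam) {\<omega>\<in>space (SS lam). shd \<omega> \<in> D}"
      by (rule nn_integral_cmult_indicator) measurable
    finally show "(\<integral>\<^sup>+\<omega>. indicator {\<omega>\<in>space (SS lam). shd \<omega> \<in> D \<and> shd (stl \<omega>) \<in> D} (x ## \<omega>) \<partial>SS lam) = \<dots>" .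
  qed
  also have "\<dots> = emeasure (mu lam) D * emeasure (SS lam) {\<omega>\<in>space (SS lam). shd \<omega> \<in> D}"
    by (subst nn_integral_multc) auto
  also have "emeasure (SS lam) {\<omega>\<in>space (SS lam). shd \<omega> \<in> D} = emeasure (mu lam) D"
    using shd_emeasure[OF D] by simp
  finally show ?thesis .
qed

lemma first_jump:
  assumes t: "0 \<le> t" and B[measurable]: "B \<in> sets borel"
  shows "measure (SS lam) {\<omega>. hold (fst (shd \<omega>)) \<le> t \<and> snd (shd \<omega>) \<in> B} = qq t * measure muU B"
proof -
  have D: "{a. hold a \<le> t} \<times> B \<in> sets (borel \<Otimes>\<^sub>M borel)"
    by (rule pair_measureI) (auto simp: pred_def)
  have "{\<omega>. hold (fst (shd \<omega>)) \<le> t \<and> snd (shd \<omega>) \<in> B} = {\<omega>. shd \<omega> \<in> {a. hold a \<le> t} \<times> B}"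
    by (auto simp: mem_Times_iff)
  then have "emeasure (SS lam) {\<omega>. hold (fst (shd \<omega>)) \<le> t \<and> snd (shd \<omega>) \<in> B} = emeasure (mu lam) ({a. hold a \<le> t} \<times> B)"
    using shd_emeasure[OF D] by simp
  then show ?thesis using mu_rect[OF t B] by (simp add: S.emeasure_eq_measure P.emeasure_eq_measure mu_def)
qed

lemma two_jumps:
  assumes t: "0 \<le> t"
  shows "measure (SS lam) {\<omega>. hold (fst (shd \<omega>)) + hold (fst (shd (stl \<omega>))) \<le> t} \<le> qq t ^ 2"
proof -
  define D where "D = {a. hold a \<le> t} \<times> (UNIV :: real set)"
  have D: "D \<in> sets (borel \<Otimes>\<^sub>M borel)" unfolding D_def
    by (rule pair_measureI) (auto simp: pred_def)
  have mD: "measure (mu lam) D = qq t" using mu_rect[OF t, of UNIV] U.prob_space by (simp add: D_def)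
  have sub: "{\<omega>. hold (fst (shd \<omega>)) + hold (fst (shd (stl \<omega>))) \<le> t} \<subseteq> {\<omega>. shd \<omega> \<in> D \<and> shd (stl \<omega>) \<in> D}"
    using hold_pos by (auto simp: D_def mem_Times_iff) (smt (verit) hold_pos)+
  have "{\<omega>. shd \<omega> \<in> D \<and> shd (stl \<omega>) \<in> D} \<in> sets (SS lam)"
  proof -
    have "{\<omega>. shd \<omega> \<in> D \<and> shd (stl \<omega>) \<in> D} = {\<omega>\<in>space (SS lam). shd \<omega> \<in> D \<and> shd (stl \<omega>) \<in> D}" by simp
    also have "\<dots> \<in> sets (SS lam)" using D unfolding SS_def by measurable
    finally show ?thesis .
  qed
  then have "measure (SS lam) {\<omega>. hold (fst (shd \<omega>)) + hold (fst (shd (stl \<omega>))) \<le> t} \<le> measure (SS lam) {\<omega>. shd \<omega> \<in> D \<and> shd (stl \<omega>) \<in> D}"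
    using sub by (intro S.finite_measure_mono) auto
  also have "\<dots> = measure (mu lam) D * measure (mu lam) D"
    using shd2_emeasure[OF D] P.emeasure_eq_measure S.emeasure_eq_measure
    by (simp add: mu_def ennreal_mult'[symmetric])
  finally show ?thesis using mD by (simp add: power2_eq_square)
qed

end


context ctmc_lam
begin

lemma pt_short:
  fixes F :: "'a::countable \<Rightarrow> real \<Rightarrow> 'a"
  assumes F[measurable]: "\<And>i. F i \<in> measurable borel (count_space UNIV)" and t: "0 \<le> t"
  shows "\<bar>pt F c i j t - ((if i = j then 1 else 0) * exp (- lam * t) + qq t * measure muU {u. F i u = j})\<bar> \<le> qq t ^ 2"
proof -
  define E1 where "E1 = {\<omega>::(real \<times> real) stream. t < hold (fst (shd \<omega>))}"
  define E2 where "E2 = {\<omega>. hold (fst (shd \<omega>)) \<le> t \<and> snd (shd \<omega>) \<in> {u. F i u = j}}"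
  define E3 where "E3 = {\<omega>::(real \<times> real) stream. hold (fst (shd \<omega>)) + hold (fst (shd (stl \<omega>))) \<le> t}"
  define E1' where "E1' = (if i = j then E1 else {})"
  define XJ where "XJ = {\<omega>. X F c i \<omega> t = j}"
  have B[measurable]: "{u. F i u = j} \<in> sets borel"
  proof -
    have "{u. F i u = j} = F i -` {j} \<inter> space borel" by auto
    also have "\<dots> \<in> sets borel" by (rule measurable_sets[OF F]) simp
    finally show ?thesis .
  qed
  have sets: "E1 \<in> sets (SS lam)" "E2 \<in> sets (SS lam)" "E3 \<in> sets (SS lam)" "E1' \<in> sets (SS lam)" "XJ \<in> sets (SS lam)"
  proof -
    have "E1 = {\<omega>\<in>space (SS lam). t < hold (fst (shd \<omega>))}" by (simp add: E1_def)
    also have "\<dots> \<in> sets (SS lam)" unfolding SS_def by measurable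
    finally show 1: "E1 \<in> sets (SS lam)" .
    have "E2 = {\<omega>\<in>space (SS lam). hold (fst (shd \<omega>)) \<le> t \<and> snd (shd \<omega>) \<in> {u. F i u = j}}" by (simp add: E2_def)
    also have "\<dots> \<in> sets (SS lam)" unfolding SS_def by measurable
    finally show "E2 \<in> sets (SS lam)" .
    have "E3 = {\<omega>\<in>space (SS lam). hold (fst (shd \<omega>)) + hold (fst (shd (stl \<omega>))) \<le> t}" by (simp add: E3_def)
    also have "\<dots> \<in> sets (SS lam)" unfolding SS_def by measurable
    finally show "E3 \<in> sets (SS lam)" .
    show "E1' \<in> sets (SS lam)" using 1 by (simp add: E1'_def)
    show "XJ \<in> sets (SS lam)" unfolding XJ_def by measurable
  qed
  have m1: "measure (SS lam) E1' = (if i = j then 1 else 0) * exp (- lam * t)"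
  proof -
    have "measure (SS lam) E1 = exp (- lam * t)"
    proof -
      have "E1 = UNIV - {\<omega>. hold (fst (shd \<omega>)) \<le> t \<and> snd (shd \<omega>) \<in> UNIV}" by (auto simp: E1_def)
      moreover have "{\<omega>. hold (fst (shd \<omega>)) \<le> t \<and> snd (shd \<omega>) \<in> UNIV} \<in> sets (SS lam)"
      proof -
        have "{\<omega>::(real \<times> real) stream. hold (fst (shd \<omega>)) \<le> t \<and> snd (shd \<omega>) \<in> UNIV} = {\<omega>\<in>space (SS lam). hold (fst (shd \<omega>)) \<le> t}" by simp
        also have "\<dots> \<in> sets (SS lam)" unfolding SS_def by measurable
        finally show ?thesis .
      qed
      ultimately show ?thesis using S.prob_compl[of "{\<omega>. hold (fst (shd \<omega>)) \<le> t \<and> snd (shd \<omega>) \<in> UNIV}"]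
          first_jump[OF t, of UNIV] U.prob_space by (simp add: qq_def)
    qed
    then show ?thesis by (simp add: E1'_def)
  qed
  have m2: "measure (SS lam) E2 = qq t * measure muU {u. F i u = j}"
    unfolding E2_def by (rule first_jump[OF t B])
  have m3: "measure (SS lam) E3 \<le> qq t ^ 2"
    unfolding E3_def by (rule two_jumps[OF t])
  have d12: "E1' \<inter> E2 = {}" by (auto simp: E1'_def E1_def E2_def)
  have up: "XJ \<subseteq> E1' \<union> E2 \<union> E3"
  proof
    fix \<omega> assume "\<omega> \<in> XJ"
    then have xj: "X F c i \<omega> t = j" by (simp add: XJ_def)
    show "\<omega> \<in> E1' \<union> E2 \<union> E3"
    proof (cases "t < hold (fst (shd \<omega>))")
      case True
      then show ?thesis using X_before1[OF t True, of F c i] xj by (simp add: E1'_def E1_def)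
    next
      case False
      show ?thesis
      proof (cases "hold (fst (shd \<omega>)) + hold (fst (shd (stl \<omega>))) \<le> t")
        case True then show ?thesis by (simp add: E3_def)
      next
        case False2: False
        then show ?thesis using X_between[of \<omega> t, OF _ False2, of F c i] False xj by (simp add: E2_def)
      qed
    qed
  qed
  have low: "(E1' \<union> E2) - E3 \<subseteq> XJ"
  proof
    fix \<omega> assume w: "\<omega> \<in> (E1' \<union> E2) - E3"
    show "\<omega> \<in> XJ"
    proof (cases "\<omega> \<in> E1'")
      case True
      then show ?thesis using X_before1[OF t, of \<omega> F c i] by (auto simp: E1'_def E1_def XJ_def split: if_splits)
    next
      case False
      then have "\<omega> \<in> E2" "\<omega> \<notin> E3" using w by auto
      then show ?thesis using X_between[of \<omega> t F c i] by (simp add: E2_def E3_def XJ_def)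
    qed
  qed
  have "pt F c i j t \<le> measure (SS lam) (E1' \<union> E2 \<union> E3)"
    unfolding pt_def XJ_def[symmetric] using up sets by (intro S.finite_measure_mono) auto
  also have "\<dots> \<le> measure (SS lam) (E1' \<union> E2) + measure (SS lam) E3"
    using sets by (intro measure_subadditive) (auto simp: S.emeasure_eq_measure)
  also have "measure (SS lam) (E1' \<union> E2) = measure (SS lam) E1' + measure (SS lam) E2"
    using sets d12 by (intro S.finite_measure_Union) auto
  finally have U: "pt F c i j t \<le> measure (SS lam) E1' + measure (SS lam) E2 + measure (SS lam) E3" .
  have "measure (SS lam) E1' + measure (SS lam) E2 - measure (SS lam) E3 \<le> measure (SS lam) ((E1' \<union> E2) - E3)"
  proof -
    have "measure (SS lam) ((E1' \<union> E2) - E3) = measure (SS lam) (E1' \<union> E2) - measure (SS lam) ((E1' \<union> E2) \<inter> E3)"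
      using sets by (intro S.finite_measure_Diff') auto
    moreover have "measure (SS lam) ((E1' \<union> E2) \<inter> E3) \<le> measure (SS lam) E3"
      using sets by (intro S.finite_measure_mono) auto
    moreover have "measure (SS lam) (E1' \<union> E2) = measure (SS lam) E1' + measure (SS lam) E2"
      using sets d12 by (intro S.finite_measure_Union) auto
    ultimately show ?thesis by linarith
  qed
  also have "\<dots> \<le> pt F c i j t"
    unfolding pt_def XJ_def[symmetric] using low sets by (intro S.finite_measure_mono) auto
  finally have L: "measure (SS lam) E1' + measure (SS lam) E2 - measure (SS lam) E3 \<le> pt F c i j t" .
  show ?thesis using U L m1 m2 m3 measure_nonneg[of "SS lam" E3] by (simp add: abs_le_iff)
qed

end


context ctmc_lam
begin

lemma pt_deriv:
  fixes F :: "'a::countable \<Rightarrow> real \<Rightarrow> 'a"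
  assumes F[measurable]: "\<And>i. F i \<in> measurable borel (count_space UNIV)"
  shows "((\<lambda>t. pt F c i j t) has_real_derivative
            lam * (measure muU {u. F i u = j} - (if i = j then 1 else 0))) (at_right 0)"
proof -
  define \<pi> where "\<pi> = measure muU {u. F i u = j}"
  define \<delta> :: real where "\<delta> = (if i = j then 1 else 0)"
  define h where "h t = \<delta> * exp (- lam * t) + (1 - exp (- lam * t)) * \<pi>" for t
  define r where "r t = pt F c i j t - h t" for t
  have hd: "(h has_real_derivative (\<delta> * (- lam) + lam * \<pi>)) (at 0 within {0<..})"
    unfolding h_def by (rule derivative_eq_intros refl | simp)+
  have r0: "r 0 = 0" by (simp add: r_def h_def pt_0 \<delta>_def)
  have rb: "\<bar>r t\<bar> \<le> lam\<^sup>2 * t\<^sup>2" if "0 \<le> t" for t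
  proof -
    have "\<bar>r t\<bar> \<le> qq t ^ 2"
      using pt_short[where F=F and c=c and i=i and j=j, OF F that] by (simp add: r_def h_def \<pi>_def \<delta>_def qq_def algebra_simps)
    also have "\<dots> \<le> (lam * t) ^ 2" by (intro power_mono qq_le qq_nonneg that)
    finally show ?thesis by (simp add: power_mult_distrib)
  qed
  have rd: "(r has_real_derivative 0) (at 0 within {0<..})"
  proof (subst has_field_derivative_iff)
    show "((\<lambda>y. (r y - r 0) / (y - 0)) \<longlongrightarrow> 0) (at 0 within {0<..})"
    proof (rule Lim_null_comparison)
      show "\<forall>\<^sub>F y in at 0 within {0<..}. norm ((r y - r 0) / (y - 0)) \<le> lam\<^sup>2 * y"
        unfolding eventually_at_filter
      proof (intro always_eventually allI impI)
        fix y :: real assume "y \<noteq> 0" "y \<in> {0<..}"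
        then have y: "0 < y" by simp
        have "\<bar>r y\<bar> / y \<le> lam\<^sup>2 * y\<^sup>2 / y" using rb[of y] y by (intro divide_right_mono) auto
        then show "norm ((r y - r 0) / (y - 0)) \<le> lam\<^sup>2 * y"
          using y r0 by (simp add: power2_eq_square abs_div)
      qed
      show "((\<lambda>y. lam\<^sup>2 * y) \<longlongrightarrow> 0) (at 0 within {0<..})"
        by (rule tendsto_mult_right_zero) (rule tendsto_ident_at)
    qed
  qed
  have "((\<lambda>t. h t + r t) has_real_derivative (\<delta> * (- lam) + lam * \<pi>) + 0) (at 0 within {0<..})"
    by (rule DERIV_add[OF hd rd])
  moreover have "(\<lambda>t. h t + r t) = (\<lambda>t. pt F c i j t)" by (simp add: r_def)
  ultimately show ?thesis by (simp add: \<pi>_def \<delta>_def algebra_simps)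
qed

end


lemma pred_eq_countable[measurable (raw)]:
  fixes f g :: "'b \<Rightarrow> 'a::countable"
  assumes [measurable]: "f \<in> measurable M (count_space UNIV)" "g \<in> measurable M (count_space UNIV)"
  shows "Measurable.pred M (\<lambda>x. f x = g x)"
proof -
  have "Measurable.pred M (\<lambda>x. (\<lambda>k x. k = g x) (f x) x)"
    by (rule measurable_compose_countable[where g=f]) measurable
  then show ?thesis by simp
qed

lemma pred_neq_countable[measurable (raw)]:
  fixes f g :: "'b \<Rightarrow> 'a::countable"
  assumes [measurable]: "f \<in> measurable M (count_space UNIV)" "g \<in> measurable M (count_space UNIV)"
  shows "Measurable.pred M (\<lambda>x. f x \<noteq> g x)"
  using pred_eq_countable[OF assms] by (rule pred_intros_logic)

lemma F2_measurable:
  fixes Fx Fy :: "nat \<Rightarrow> real \<Rightarrow> nat"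
  assumes [measurable]: "\<And>i. Fx i \<in> measurable borel (count_space UNIV)" "\<And>i. Fy i \<in> measurable borel (count_space UNIV)"
  shows "(\<lambda>(a, b) u. (Fx a u, Fy b u)) p \<in> measurable borel (count_space UNIV)"
proof -
  obtain a b where p: "p = (a, b)" by (cases p)
  have "(\<lambda>u. (Fx a u, Fy b u)) \<in> measurable borel (count_space UNIV)"
  proof (subst measurable_count_space_eq2_countable, safe)
    fix j1 j2
    have "(\<lambda>u. (Fx a u, Fy b u)) -` {(j1, j2)} \<inter> space borel = (Fx a -` {j1} \<inter> space borel) \<inter> (Fy b -` {j2} \<inter> space borel)"
      by auto
    also have "\<dots> \<in> sets borel" by (intro sets.Int measurable_sets[of _ borel "count_space UNIV"]) auto
    finally show "(\<lambda>u. (Fx a u, Fy b u)) -` {(j1, j2)} \<inter> space borel \<in> sets borel" .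
  qed auto
  then show ?thesis by (simp add: p)
qed

locale coupling = ctmc_lam +
  fixes Fx Fy :: "nat \<Rightarrow> real \<Rightarrow> nat" and S :: "nat set" and c :: nat and \<delta> :: real
  assumes Fx_meas[measurable]: "\<And>i. Fx i \<in> measurable borel (count_space UNIV)"
    and Fy_meas[measurable]: "\<And>i. Fy i \<in> measurable borel (count_space UNIV)"
    and FxS: "\<And>i u. i \<in> S \<Longrightarrow> Fx i u \<in> S" and FyS: "\<And>i u. i \<in> S \<Longrightarrow> Fy i u \<in> S"
    and cS: "c \<in> S" and delta: "\<And>k. k \<in> S \<Longrightarrow> measure muU {u. Fx k u \<noteq> Fy k u} \<le> \<delta>"
begin

definition G :: "nat \<Rightarrow> real \<Rightarrow> real" where
  "G i s = measure (SS lam) {\<omega>. X Fx c i \<omega> s \<noteq> X Fy c i \<omega> s}"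

lemma G_set[measurable]: "{\<omega>. X Fx c i \<omega> s \<noteq> X Fy c i \<omega> s} \<in> sets (SS lam)"
proof -
  have "{\<omega>. X Fx c i \<omega> s \<noteq> X Fy c i \<omega> s} = {\<omega>\<in>space (SS lam). X Fx c i \<omega> s \<noteq> X Fy c i \<omega> s}" by simp
  also have "\<dots> \<in> sets (SS lam)" by measurable
  finally show ?thesis .
qed

lemma G_base:
  assumes k: "k \<in> S" and r: "0 \<le> r"
  shows "G k r \<le> lam * r * \<delta> + (lam * r)\<^sup>2"
proof -
  define E2 where "E2 = {\<omega>::(real \<times> real) stream. hold (fst (shd \<omega>)) \<le> r \<and> snd (shd \<omega>) \<in> {u. Fx k u \<noteq> Fy k u}}"
  define E3 where "E3 = {\<omega>::(real \<times> real) stream. hold (fst (shd \<omega>)) + hold (fst (shd (stl \<omega>))) \<le> r}"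
  have B[measurable]: "{u. Fx k u \<noteq> Fy k u} \<in> sets borel"
  proof -
    have "{u. Fx k u \<noteq> Fy k u} = {u\<in>space borel. Fx k u \<noteq> Fy k u}" by simp
    also have "\<dots> \<in> sets borel" by measurable
    finally show ?thesis .
  qed
  have s2: "E2 \<in> sets (SS lam)"
  proof -
    have "E2 = {\<omega>\<in>space (SS lam). hold (fst (shd \<omega>)) \<le> r \<and> snd (shd \<omega>) \<in> {u. Fx k u \<noteq> Fy k u}}" by (simp add: E2_def)
    also have "\<dots> \<in> sets (SS lam)" unfolding SS_def by measurable
    finally show ?thesis .
  qed
  have s3: "E3 \<in> sets (SS lam)"
  proof -
    have "E3 = {\<omega>\<in>space (SS lam). hold (fst (shd \<omega>)) + hold (fst (shd (stl \<omega>))) \<le> r}" by (simp add: E3_def)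
    also have "\<dots> \<in> sets (SS lam)" unfolding SS_def by measurable
    finally show ?thesis .
  qed
  have sub: "{\<omega>. X Fx c k \<omega> r \<noteq> X Fy c k \<omega> r} \<subseteq> E2 \<union> E3"
  proof
    fix \<omega> assume w: "\<omega> \<in> {\<omega>. X Fx c k \<omega> r \<noteq> X Fy c k \<omega> r}"
    show "\<omega> \<in> E2 \<union> E3"
    proof (cases "r < hold (fst (shd \<omega>))")
      case True
      then show ?thesis using w X_before1[OF r True, where F=Fx and c=c and i=k] X_before1[OF r True, where F=Fy and c=c and i=k] by simp
    next
      case False
      show ?thesis
      proof (cases "hold (fst (shd \<omega>)) + hold (fst (shd (stl \<omega>))) \<le> r")
        case True then show ?thesis by (simp add: E3_def)
      next
        case False2: False
        have "hold (fst (shd \<omega>)) \<le> r" using False by simp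
        then show ?thesis using w X_between[OF _ False2, where F=Fx and c=c and i=k] X_between[OF _ False2, where F=Fy and c=c and i=k]
          by (simp add: E2_def)
      qed
    qed
  qed
  have "G k r \<le> measure (SS lam) (E2 \<union> E3)"
    unfolding G_def using sub s2 s3 by (intro S.finite_measure_mono) auto
  also have "\<dots> \<le> measure (SS lam) E2 + measure (SS lam) E3"
    using s2 s3 by (intro measure_subadditive) (auto simp: S.emeasure_eq_measure)
  also have "measure (SS lam) E2 = qq r * measure muU {u. Fx k u \<noteq> Fy k u}"
    unfolding E2_def by (rule first_jump[OF r B])
  also have "\<dots> \<le> (lam * r) * \<delta>"
    by (intro mult_mono qq_le delta k qq_nonneg r) (use lam_pos r in auto)
  also have "measure (SS lam) E3 \<le> qq r ^ 2" unfolding E3_def by (rule two_jumps[OF r])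
  also have "\<dots> \<le> (lam * r) ^ 2" by (intro power_mono qq_le qq_nonneg r)
  finally show ?thesis by simp
qed

abbreviation "F2 \<equiv> (\<lambda>(a, b) u. (Fx a u, Fy b u))"

lemma G_step:
  assumes i: "i \<in> S" and s: "0 \<le> s" and r: "0 \<le> r"
  shows "G i (s + r) \<le> G i s + (lam * r * \<delta> + (lam * r)\<^sup>2)"
proof -
  define \<beta> where "\<beta> = lam * r * \<delta> + (lam * r)\<^sup>2"
  have F2m[measurable]: "\<And>p. F2 p \<in> measurable borel (count_space UNIV)"
    by (rule F2_measurable[OF Fx_meas Fy_meas])
  define A where "A k = {\<omega>. X Fx c i \<omega> s = k \<and> X Fy c i \<omega> s = k \<and> X Fx c i \<omega> (s + r) \<noteq> X Fy c i \<omega> (s + r)}" for k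
  define B where "B k = {\<omega>. X F2 (c, c) (i, i) \<omega> s = (k, k)}" for k
  define C where "C k = {\<omega>. X Fx c k \<omega> r \<noteq> X Fy c k \<omega> r}" for k
  have Am[measurable]: "A k \<in> sets (SS lam)" for k
  proof -
    have "A k = {\<omega>\<in>space (SS lam). X Fx c i \<omega> s = k \<and> X Fy c i \<omega> s = k \<and> X Fx c i \<omega> (s + r) \<noteq> X Fy c i \<omega> (s + r)}"
      by (simp add: A_def)
    also have "\<dots> \<in> sets (SS lam)" by measurable
    finally show ?thesis .
  qed
  have Bm[measurable]: "B k \<in> sets (SS lam)" for k unfolding B_def by (rule X_set_measurable[OF F2m])
  have Cm[measurable]: "C k \<in> sets (SS lam)" for k unfolding C_def by (rule G_set)
  have Ak: "emeasure (SS lam) (A k) \<le> emeasure (SS lam) (B k) * ennreal \<beta>" for k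
  proof -
    have "emeasure (SS lam) (A k) = emeasure (SS lam) (B k) * emeasure (SS lam) (C k)"
      unfolding B_def
    proof (rule markov_event[OF F2m Cm Am s])
      fix \<omega> m assume m: "T \<omega> m \<le> s" "s < T \<omega> (Suc m)"
      show "\<omega> \<in> A k \<longleftrightarrow> Z F2 (i, i) \<omega> m = (k, k) \<and> shiftT m s \<omega> \<in> C k"
        using X_eq[OF m, of Fx c i] X_eq[OF m, of Fy c i] X_shift[OF r m, of Fx c i] X_shift[OF r m, of Fy c i]
        by (auto simp: A_def C_def Z_pair)
    qed
    also have "\<dots> \<le> emeasure (SS lam) (B k) * ennreal \<beta>"
    proof (cases "k \<in> S")
      case True
      have "emeasure (SS lam) (C k) = ennreal (G k r)" by (simp add: C_def G_def S.emeasure_eq_measure)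
      also have "\<dots> \<le> ennreal \<beta>" unfolding \<beta>_def by (intro ennreal_leI G_base True r)
      finally show ?thesis by (intro mult_left_mono) auto
    next
      case False
      have "B k = {}" using X_in[where S=S and F=Fx and c=c and i=i, OF FxS i cS] False by (auto simp: B_def X_pair)
      then show ?thesis by simp
    qed
    finally show ?thesis .
  qed
  have "(\<Sum>k. emeasure (SS lam) (B k)) = emeasure (SS lam) (\<Union>k. B k)"
    by (rule suminf_emeasure) (auto simp: disjoint_family_on_def B_def)
  also have "\<dots> \<le> 1" by (rule S.emeasure_le_1)
  finally have sumB: "(\<Sum>k. emeasure (SS lam) (B k)) \<le> 1" .
  have sub: "{\<omega>. X Fx c i \<omega> (s + r) \<noteq> X Fy c i \<omega> (s + r)} \<subseteq> {\<omega>. X Fx c i \<omega> s \<noteq> X Fy c i \<omega> s} \<union> (\<Union>k. A k)"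
    by (auto simp: A_def)
  have "emeasure (SS lam) {\<omega>. X Fx c i \<omega> (s + r) \<noteq> X Fy c i \<omega> (s + r)}
      \<le> emeasure (SS lam) ({\<omega>. X Fx c i \<omega> s \<noteq> X Fy c i \<omega> s} \<union> (\<Union>k. A k))"
    using sub by (intro emeasure_mono) measurable
  also have "\<dots> \<le> emeasure (SS lam) {\<omega>. X Fx c i \<omega> s \<noteq> X Fy c i \<omega> s} + emeasure (SS lam) (\<Union>k. A k)"
    by (intro emeasure_subadditive) measurable
  also have "emeasure (SS lam) (\<Union>k. A k) \<le> (\<Sum>k. emeasure (SS lam) (A k))"
    by (intro emeasure_subadditive_countably) auto
  also have "\<dots> \<le> (\<Sum>k. emeasure (SS lam) (B k) * ennreal \<beta>)"
    by (intro suminf_le Ak) auto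
  also have "\<dots> = (\<Sum>k. emeasure (SS lam) (B k)) * ennreal \<beta>"
    by (rule ennreal_suminf_multc)
  also have "\<dots> \<le> 1 * ennreal \<beta>" by (intro mult_right_mono sumB) auto
  finally have "emeasure (SS lam) {\<omega>. X Fx c i \<omega> (s + r) \<noteq> X Fy c i \<omega> (s + r)} \<le> ennreal (G i s) + ennreal \<beta>"
    by (simp add: G_def S.emeasure_eq_measure)
  moreover have "0 \<le> \<beta>" unfolding \<beta>_def using lam_pos r delta[OF cS] measure_nonneg[of muU]
    by (smt (verit) mult_nonneg_nonneg zero_le_power2)
  ultimately show ?thesis
    by (simp add: G_def S.emeasure_eq_measure \<beta>_def[symmetric] ennreal_plus[symmetric] measure_nonneg del: ennreal_plus)
qed

lemma G_0: "G i 0 = 0"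
  by (simp add: G_def X_0)

lemma G_iter:
  assumes i: "i \<in> S" and r: "0 \<le> r"
  shows "G i (real m * r) \<le> real m * (lam * r * \<delta> + (lam * r)\<^sup>2)"
proof (induction m)
  case 0 then show ?case by (simp add: G_0)
next
  case (Suc m)
  have "G i (real (Suc m) * r) = G i (real m * r + r)" by (simp add: algebra_simps)
  also have "\<dots> \<le> G i (real m * r) + (lam * r * \<delta> + (lam * r)\<^sup>2)"
    by (rule G_step[OF i _ r]) (use r in simp)
  also have "\<dots> \<le> real (Suc m) * (lam * r * \<delta> + (lam * r)\<^sup>2)"
    using Suc by (simp add: algebra_simps)
  finally show ?case .
qed

lemma G_bound:
  assumes i: "i \<in> S" and s: "0 \<le> s"
  shows "G i s \<le> lam * \<delta> * s"
proof (rule ccontr)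
  assume "\<not> G i s \<le> lam * \<delta> * s"
  then have e: "0 < G i s - lam * \<delta> * s" by simp
  obtain n :: nat where n: "(lam * s)\<^sup>2 / (G i s - lam * \<delta> * s) < real n" using reals_Archimedean2 by blast
  define m where "m = Suc n"
  have m: "0 < real m" "(lam * s)\<^sup>2 / (G i s - lam * \<delta> * s) < real m" using n by (auto simp: m_def)
  have "G i s = G i (real m * (s / real m))" using m by simp
  also have "\<dots> \<le> real m * (lam * (s / real m) * \<delta> + (lam * (s / real m))\<^sup>2)"
    by (rule G_iter[OF i]) (use s m in simp)
  also have "\<dots> = lam * \<delta> * s + (lam * s)\<^sup>2 / real m"
    using m by (simp add: field_simps power2_eq_square)
  finally have "G i s - lam * \<delta> * s \<le> (lam * s)\<^sup>2 / real m" by simp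
  moreover have "(lam * s)\<^sup>2 / real m < G i s - lam * \<delta> * s"
    using m e by (simp add: divide_less_eq mult.commute pos_divide_less_eq)
  ultimately show False by simp
qed

end


definition cs :: "(nat \<Rightarrow> real) \<Rightarrow> nat \<Rightarrow> real" where
  "cs w j = (\<Sum>l<j. w l)"

definition Gq :: "(nat \<Rightarrow> real) \<Rightarrow> real \<Rightarrow> nat" where
  "Gq w v = (LEAST j. v < cs w (Suc j))"

lemma Gq_measurable[measurable]: "Gq w \<in> measurable borel (count_space UNIV)"
  unfolding Gq_def by measurable

lemma cs_mono: "(\<And>l. 0 \<le> w l) \<Longrightarrow> j \<le> k \<Longrightarrow> cs w j \<le> cs w k"
  unfolding cs_def by (intro sum_mono2) auto

lemma cs_nonneg: "(\<And>l. 0 \<le> w l) \<Longrightarrow> 0 \<le> cs w j"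
  unfolding cs_def by (intro sum_nonneg) auto

lemma cs_le_suminf: "(\<And>l. 0 \<le> w l) \<Longrightarrow> summable w \<Longrightarrow> cs w j \<le> suminf w"
  unfolding cs_def by (intro sum_le_suminf) auto

lemma cs_Suc: "cs w (Suc j) = cs w j + w j"
  by (simp add: cs_def)

lemma Gq_iff:
  assumes w: "\<And>l. 0 \<le> w l" "summable w" and v: "0 \<le> v" "v < suminf w"
  shows "Gq w v = j \<longleftrightarrow> cs w j \<le> v \<and> v < cs w (Suc j)"
proof -
  have "(\<lambda>n. cs w n) \<longlonglongrightarrow> suminf w"
    using summable_LIMSEQ[OF w(2)] by (simp add: cs_def)
  then have "\<exists>n. v < cs w n"
    using v(2) by (metis eventually_sequentially order_tendstoD(1) order_refl)
  then obtain n where n: "v < cs w n" by blast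
  have "n \<noteq> 0" using n v(1) by (metis cs_def lessThan_0 sum.empty not_less)
  then obtain n' where n': "v < cs w (Suc n')" using n by (cases n) auto
  define g where "g = Gq w v"
  have g1: "v < cs w (Suc g)" unfolding g_def Gq_def by (rule LeastI[of _ n']) (rule n')
  have g2: "cs w g \<le> v"
  proof (cases g)
    case 0 then show ?thesis using v(1) by (simp add: cs_def)
  next
    case (Suc g')
    have "\<not> v < cs w (Suc g')"
    proof
      assume "v < cs w (Suc g')"
      then have "g \<le> g'" unfolding g_def Gq_def by (rule Least_le)
      then show False using Suc by simp
    qed
    then show ?thesis using Suc by simp
  qed
  show ?thesis
  proof
    assume "Gq w v = j" then show "cs w j \<le> v \<and> v < cs w (Suc j)" using g1 g2 g_def by simp
  next
    assume j: "cs w j \<le> v \<and> v < cs w (Suc j)"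
    show "Gq w v = j"
    proof (rule ccontr)
      assume "Gq w v \<noteq> j"
      then have "g < j \<or> j < g" unfolding g_def by auto
      then show False
      proof
        assume "g < j"
        then have "cs w (Suc g) \<le> cs w j" using w by (intro cs_mono) auto
        then show False using g1 j by simp
      next
        assume "j < g"
        then have "cs w (Suc j) \<le> cs w g" using w by (intro cs_mono) auto
        then show False using g2 j by simp
      qed
    qed
  qed
qed

lemma Gq_pos:
  assumes w: "\<And>l. 0 \<le> w l" "summable w" and v: "0 \<le> v" "v < suminf w"
  shows "0 < w (Gq w v)"
  using Gq_iff[OF w v, of "Gq w v"] by (simp add: cs_Suc)

lemma Gq_set:
  assumes w: "\<And>l. 0 \<le> w l" "summable w"
  shows "{v. 0 \<le> v \<and> v < suminf w \<and> Gq w v = j} = {cs w j..<cs w (Suc j)}"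
proof -
  have "cs w (Suc j) \<le> suminf w" by (rule cs_le_suminf[OF w])
  moreover have "0 \<le> cs w j" by (rule cs_nonneg[OF w(1)])
  ultimately show ?thesis using Gq_iff[OF w] by fastforce
qed


definition ext :: "nat set \<Rightarrow> nat \<Rightarrow> (nat \<Rightarrow> real) \<Rightarrow> nat \<Rightarrow> real" where
  "ext S i f j = (if j \<in> S \<and> j \<noteq> i then f j else 0)"

lemma ext_sums:
  assumes "f summable_on (S - {i})"
  shows "ext S i f sums (\<Sum>\<^sub>\<infinity>j\<in>S - {i}. f j)"
proof -
  have "(f has_sum (\<Sum>\<^sub>\<infinity>j\<in>S - {i}. f j)) (S - {i})" using assms by simp
  moreover have "(ext S i f has_sum (\<Sum>\<^sub>\<infinity>j\<in>S - {i}. f j)) UNIV \<longleftrightarrow> (f has_sum (\<Sum>\<^sub>\<infinity>j\<in>S - {i}. f j)) (S - {i})"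
    by (rule has_sum_cong_neutral) (auto simp: ext_def)
  ultimately have "(ext S i f has_sum (\<Sum>\<^sub>\<infinity>j\<in>S - {i}. f j)) UNIV" by simp
  then show ?thesis by (rule has_sum_imp_sums)
qed

lemma summable_on_cdiv_left:
  fixes f :: "'a \<Rightarrow> real"
  assumes "f summable_on A" shows "(\<lambda>x. f x / c) summable_on A"
  using summable_on_cmult_left[OF assms, of "inverse c"] by (simp add: divide_inverse)

lemma infsum_cdiv_left:
  fixes f :: "'a \<Rightarrow> real"
  assumes "f summable_on A" shows "(\<Sum>\<^sub>\<infinity>x\<in>A. f x / c) = (\<Sum>\<^sub>\<infinity>x\<in>A. f x) / c"
  using infsum_cmult_left[of "inverse c" f A] assms by (simp add: divide_inverse)

definition wmin :: "(nat \<Rightarrow> nat \<Rightarrow> real) \<Rightarrow> (nat \<Rightarrow> nat \<Rightarrow> real) \<Rightarrow> nat set \<Rightarrow> real \<Rightarrow> nat \<Rightarrow> nat \<Rightarrow> real" where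
  "wmin qa qb S l i = ext S i (\<lambda>j. min (qa i j) (qb i j) / l)"

definition wres :: "(nat \<Rightarrow> nat \<Rightarrow> real) \<Rightarrow> (nat \<Rightarrow> nat \<Rightarrow> real) \<Rightarrow> nat set \<Rightarrow> real \<Rightarrow> nat \<Rightarrow> nat \<Rightarrow> real" where
  "wres qa qb S l i = ext S i (\<lambda>j. (qa i j - min (qa i j) (qb i j)) / l)"

definition mk :: "(nat \<Rightarrow> nat \<Rightarrow> real) \<Rightarrow> (nat \<Rightarrow> nat \<Rightarrow> real) \<Rightarrow> nat set \<Rightarrow> real \<Rightarrow> nat \<Rightarrow> real \<Rightarrow> nat" where
  "mk qa qb S l i u =
    (if i \<notin> S then i
     else if 0 \<le> u \<and> u < suminf (wmin qa qb S l i) then Gq (wmin qa qb S l i) u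
     else if suminf (wmin qa qb S l i) \<le> u \<and> u < suminf (wmin qa qb S l i) + suminf (wres qa qb S l i)
       then Gq (wres qa qb S l i) (u - suminf (wmin qa qb S l i))
     else i)"

lemma mk_measurable[measurable]: "mk qa qb S l i \<in> measurable borel (count_space UNIV)"
  unfolding mk_def by measurable

lemma wmin_comm: "wmin qa qb S l i = wmin qb qa S l i"
  unfolding wmin_def by (simp add: min.commute)

lemma measure_muU: "B \<in> sets borel \<Longrightarrow> measure muU B = measure lborel ({0..1} \<inter> B)"
  using emeasure_muU[of B] by (simp add: measure_def)

locale marks =
  fixes qa qb :: "nat \<Rightarrow> nat \<Rightarrow> real" and S :: "nat set" and l :: real
  assumes l_pos: "0 < l"
    and qa_nn: "\<And>i j. i \<in> S \<Longrightarrow> j \<in> S \<Longrightarrow> i \<noteq> j \<Longrightarrow> 0 \<le> qa i j"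
    and qb_nn: "\<And>i j. i \<in> S \<Longrightarrow> j \<in> S \<Longrightarrow> i \<noteq> j \<Longrightarrow> 0 \<le> qb i j"
    and qa_sum: "\<And>i. i \<in> S \<Longrightarrow> qa i summable_on (S - {i})"
    and qb_sum: "\<And>i. i \<in> S \<Longrightarrow> qb i summable_on (S - {i})"
    and qa_bd: "\<And>i. i \<in> S \<Longrightarrow> (\<Sum>\<^sub>\<infinity>j\<in>S - {i}. qa i j) \<le> l"
    and qb_bd: "\<And>i. i \<in> S \<Longrightarrow> (\<Sum>\<^sub>\<infinity>j\<in>S - {i}. qb i j) \<le> l"
begin

lemma sym: "marks qb qa S l"
  by unfold_locales (use l_pos qa_nn qb_nn qa_sum qb_sum qa_bd qb_bd in auto)

context
  fixes i assumes i: "i \<in> S"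
begin

lemma min_sum: "(\<lambda>j. min (qa i j) (qb i j) / l) summable_on (S - {i})"
proof -
  have "(\<lambda>j. min (qa i j) (qb i j)) summable_on (S - {i})"
    by (rule summable_on_comparison_test[OF qa_sum[OF i]]) (use i qa_nn qb_nn in auto)
  then show ?thesis by (rule summable_on_cdiv_left)
qed

lemma res_sum: "(\<lambda>j. (qa i j - min (qa i j) (qb i j)) / l) summable_on (S - {i})"
proof -
  have "(\<lambda>j. qa i j - min (qa i j) (qb i j)) summable_on (S - {i})"
    by (rule summable_on_comparison_test[OF qa_sum[OF i]]) (use i qa_nn qb_nn in auto)
  then show ?thesis by (rule summable_on_cdiv_left)
qed

lemma wmin_nn: "0 \<le> wmin qa qb S l i j"
  unfolding wmin_def ext_def using qa_nn[OF i] qb_nn[OF i] l_pos by auto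

lemma wres_nn: "0 \<le> wres qa qb S l i j"
  unfolding wres_def ext_def using l_pos by auto

lemma wmin_sums: "wmin qa qb S l i sums (\<Sum>\<^sub>\<infinity>j\<in>S - {i}. min (qa i j) (qb i j) / l)"
  unfolding wmin_def by (rule ext_sums[OF min_sum])

lemma wres_sums: "wres qa qb S l i sums (\<Sum>\<^sub>\<infinity>j\<in>S - {i}. (qa i j - min (qa i j) (qb i j)) / l)"
  unfolding wres_def by (rule ext_sums[OF res_sum])

lemma wmin_summable: "summable (wmin qa qb S l i)" using wmin_sums by (rule sums_summable)
lemma wres_summable: "summable (wres qa qb S l i)" using wres_sums by (rule sums_summable)

lemma total: "suminf (wmin qa qb S l i) + suminf (wres qa qb S l i) = (\<Sum>\<^sub>\<infinity>j\<in>S - {i}. qa i j) / l"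
proof -
  have eq: "wmin qa qb S l i j + wres qa qb S l i j = ext S i (\<lambda>j. qa i j / l) j" for j
    using l_pos by (simp add: wmin_def wres_def ext_def add_divide_distrib[symmetric])
  have "suminf (wmin qa qb S l i) + suminf (wres qa qb S l i) = (\<Sum>j. wmin qa qb S l i j + wres qa qb S l i j)"
    by (rule suminf_add[OF wmin_summable wres_summable])
  also have "\<dots> = suminf (ext S i (\<lambda>j. qa i j / l))" by (simp only: eq)
  also have "\<dots> = (\<Sum>\<^sub>\<infinity>j\<in>S - {i}. qa i j / l)"
    by (rule sums_unique[symmetric], rule ext_sums, rule summable_on_cdiv_left, rule qa_sum[OF i])
  also have "\<dots> = (\<Sum>\<^sub>\<infinity>j\<in>S - {i}. qa i j) / l"
    by (rule infsum_cdiv_left, rule qa_sum[OF i])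
  finally show ?thesis .
qed

lemma total_le1: "suminf (wmin qa qb S l i) + suminf (wres qa qb S l i) \<le> 1"
  unfolding total using qa_bd[OF i] l_pos by simp

lemma A_nn: "0 \<le> suminf (wmin qa qb S l i)"
  by (intro suminf_nonneg wmin_summable wmin_nn)
lemma R_nn: "0 \<le> suminf (wres qa qb S l i)"
  by (intro suminf_nonneg wres_summable wres_nn)

lemma mk_in: "mk qa qb S l i u \<in> S \<and> (mk qa qb S l i u \<noteq> i \<longrightarrow>
     (0 \<le> u \<and> u < suminf (wmin qa qb S l i) + suminf (wres qa qb S l i)))"
proof -
  let ?m = "wmin qa qb S l i" and ?r = "wres qa qb S l i"
  consider (a) "0 \<le> u \<and> u < suminf ?m" | (b) "\<not> (0 \<le> u \<and> u < suminf ?m)" "suminf ?m \<le> u \<and> u < suminf ?m + suminf ?r"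
    | (c) "\<not> (0 \<le> u \<and> u < suminf ?m)" "\<not> (suminf ?m \<le> u \<and> u < suminf ?m + suminf ?r)" by blast
  then show ?thesis
  proof cases
    case a
    have "0 < ?m (Gq ?m u)" by (rule Gq_pos[OF wmin_nn wmin_summable]) (use a in auto)
    then have "Gq ?m u \<in> S" unfolding wmin_def ext_def by (simp split: if_splits)
    moreover have "mk qa qb S l i u = Gq ?m u" using a i unfolding mk_def by simp
    ultimately show ?thesis using a R_nn by simp
  next
    case b
    have "0 < ?r (Gq ?r (u - suminf ?m))" by (rule Gq_pos[OF wres_nn wres_summable]) (use b in auto)
    then have "Gq ?r (u - suminf ?m) \<in> S" unfolding wres_def ext_def by (simp split: if_splits)
    moreover have "mk qa qb S l i u = Gq ?r (u - suminf ?m)" using b i unfolding mk_def by simp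
    ultimately show ?thesis using b A_nn by simp
  next
    case c
    have ni: "\<not> i \<notin> S" using i by simp
    have "mk qa qb S l i u = i" unfolding mk_def
      by (subst if_not_P[OF ni], subst if_not_P[OF c(1)], subst if_not_P[OF c(2)]) (rule refl)
    then show ?thesis using i by simp
  qed
qed


lemma mk_a: "0 \<le> u \<Longrightarrow> u < suminf (wmin qa qb S l i) \<Longrightarrow> mk qa qb S l i u = Gq (wmin qa qb S l i) u"
  using i unfolding mk_def by simp

lemma mk_b: "suminf (wmin qa qb S l i) \<le> u \<Longrightarrow> u < suminf (wmin qa qb S l i) + suminf (wres qa qb S l i) \<Longrightarrow>
    mk qa qb S l i u = Gq (wres qa qb S l i) (u - suminf (wmin qa qb S l i))"
  using i unfolding mk_def by simp

lemma mk_c: "\<not> (0 \<le> u \<and> u < suminf (wmin qa qb S l i) + suminf (wres qa qb S l i)) \<Longrightarrow> mk qa qb S l i u = i"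
  using mk_in[of u] by blast

lemma Gq_m_ne: "0 \<le> u \<Longrightarrow> u < suminf (wmin qa qb S l i) \<Longrightarrow> Gq (wmin qa qb S l i) u \<noteq> i"
  using Gq_pos[OF wmin_nn wmin_summable, of u] unfolding wmin_def ext_def by (auto split: if_splits)

lemma Gq_r_ne: "0 \<le> v \<Longrightarrow> v < suminf (wres qa qb S l i) \<Longrightarrow> Gq (wres qa qb S l i) v \<noteq> i"
  using Gq_pos[OF wres_nn wres_summable, of v] unfolding wres_def ext_def by (auto split: if_splits)

lemma mk_set_meas[measurable]: "{u. mk qa qb S l i u = j} \<in> sets borel"
proof -
  have "{u. mk qa qb S l i u = j} = mk qa qb S l i -` {j} \<inter> space borel" by auto
  also have "\<dots> \<in> sets borel" by (rule measurable_sets[OF mk_measurable]) simp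
  finally show ?thesis .
qed

lemma mk_prob_off:
  assumes j: "j \<in> S" "j \<noteq> i"
  shows "measure muU {u. mk qa qb S l i u = j} = qa i j / l"
proof -
  let ?m = "wmin qa qb S l i" and ?r = "wres qa qb S l i"
  let ?A = "suminf ?m" and ?R = "suminf ?r"
  have le1: "?A + ?R \<le> 1" by (rule total_le1)
  have A0: "0 \<le> ?A" "0 \<le> ?R" by (rule A_nn, rule R_nn)
  have c1: "0 \<le> cs ?m j" "cs ?m j \<le> cs ?m (Suc j)" "cs ?m (Suc j) \<le> ?A"
    using cs_nonneg[OF wmin_nn] cs_mono[OF wmin_nn] cs_le_suminf[OF wmin_nn wmin_summable] by auto
  have c2: "0 \<le> cs ?r j" "cs ?r j \<le> cs ?r (Suc j)" "cs ?r (Suc j) \<le> ?R"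
    using cs_nonneg[OF wres_nn] cs_mono[OF wres_nn] cs_le_suminf[OF wres_nn wres_summable] by auto
  define I1 where "I1 = {cs ?m j..<cs ?m (Suc j)}"
  define I2 where "I2 = {?A + cs ?r j..<?A + cs ?r (Suc j)}"
  have eq: "{0..1} \<inter> {u. mk qa qb S l i u = j} = I1 \<union> I2"
  proof (intro set_eqI iffI)
    fix u assume u: "u \<in> {0..1} \<inter> {u. mk qa qb S l i u = j}"
    show "u \<in> I1 \<union> I2"
    proof (cases "0 \<le> u \<and> u < ?A")
      case True
      then have "Gq ?m u = j" using u mk_a by simp
      then show ?thesis using Gq_iff[OF wmin_nn wmin_summable, of u j] True by (simp add: I1_def)
    next
      case False
      show ?thesis
      proof (cases "?A \<le> u \<and> u < ?A + ?R")
        case True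
        then have "Gq ?r (u - ?A) = j" using u mk_b by simp
        then show ?thesis using Gq_iff[OF wres_nn wres_summable, of "u - ?A" j] True by (auto simp: I2_def)
      next
        case False2: False
        then have "mk qa qb S l i u = i" using False u by (intro mk_c) auto
        then show ?thesis using u j by simp
      qed
    qed
  next
    fix u assume "u \<in> I1 \<union> I2"
    then show "u \<in> {0..1} \<inter> {u. mk qa qb S l i u = j}"
    proof
      assume u: "u \<in> I1"
      then have r: "0 \<le> u" "u < ?A" using c1 by (auto simp: I1_def)
      have "Gq ?m u = j" using Gq_iff[OF wmin_nn wmin_summable r, of j] u by (simp add: I1_def)
      then show ?thesis using r mk_a[OF r] le1 A0 by auto
    next
      assume u: "u \<in> I2"
      then have r: "?A \<le> u" "u < ?A + ?R" using c2 by (auto simp: I2_def)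
      have r': "0 \<le> u - ?A" "u - ?A < ?R" using r by auto
      have "Gq ?r (u - ?A) = j" using Gq_iff[OF wres_nn wres_summable r', of j] u by (auto simp: I2_def)
      then show ?thesis using r mk_b[OF r] le1 A0 by auto
    qed
  qed
  have "measure muU {u. mk qa qb S l i u = j} = measure lborel (I1 \<union> I2)"
    by (subst measure_muU) (auto simp: eq)
  also have "\<dots> = measure lborel I1 + measure lborel I2"
    by (rule measure_Union) (use c1 c2 in \<open>auto simp: I1_def I2_def\<close>)
  also have "\<dots> = ?m j + ?r j" using c1 c2 by (simp add: I1_def I2_def cs_Suc)
  also have "\<dots> = qa i j / l" using j by (simp add: wmin_def wres_def ext_def add_divide_distrib[symmetric])
  finally show ?thesis .
qed

lemma mk_prob_diag:
  shows "measure muU {u. mk qa qb S l i u = i} = 1 - (\<Sum>\<^sub>\<infinity>j\<in>S - {i}. qa i j) / l"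
proof -
  let ?m = "wmin qa qb S l i" and ?r = "wres qa qb S l i"
  let ?A = "suminf ?m" and ?R = "suminf ?r"
  have le1: "?A + ?R \<le> 1" by (rule total_le1)
  have A0: "0 \<le> ?A" "0 \<le> ?R" by (rule A_nn, rule R_nn)
  have eq: "{0..1} \<inter> {u. mk qa qb S l i u = i} = {?A + ?R..1}"
  proof (intro set_eqI iffI)
    fix u assume u: "u \<in> {0..1} \<inter> {u. mk qa qb S l i u = i}"
    have "\<not> (0 \<le> u \<and> u < ?A)" using u mk_a Gq_m_ne by auto
    moreover have "\<not> (?A \<le> u \<and> u < ?A + ?R)" using u mk_b Gq_r_ne[of "u - ?A"] by auto
    ultimately show "u \<in> {?A + ?R..1}" using u by auto
  next
    fix u assume u: "u \<in> {?A + ?R..1}"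
    then show "u \<in> {0..1} \<inter> {u. mk qa qb S l i u = i}" using mk_c[of u] A0 by auto
  qed
  have "measure muU {u. mk qa qb S l i u = i} = measure lborel {?A + ?R..1}"
    by (subst measure_muU) (auto simp: eq)
  also have "\<dots> = 1 - (?A + ?R)" using le1 by simp
  finally show ?thesis using total by simp
qed

end
end

context marks
begin

lemma absdiff_sum: "i \<in> S \<Longrightarrow> (\<lambda>j. \<bar>qa i j - qb i j\<bar>) summable_on (S - {i})"
proof -
  assume i: "i \<in> S"
  have "(\<lambda>j. qa i j + qb i j) summable_on (S - {i})"
    by (rule summable_on_add[OF qa_sum[OF i] qb_sum[OF i]])
  then show ?thesis
    by (rule summable_on_comparison_test) (use i qa_nn qb_nn in \<open>auto simp: abs_le_iff\<close>)
qed

lemma mk_couple: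
  assumes i: "i \<in> S"
  shows "measure muU {u. mk qa qb S l i u \<noteq> mk qb qa S l i u} \<le> (\<Sum>\<^sub>\<infinity>j\<in>S - {i}. \<bar>qa i j - qb i j\<bar>) / l"
proof -
  interpret B: marks qb qa S l by (rule sym)
  let ?A = "suminf (wmin qa qb S l i)" and ?Ra = "suminf (wres qa qb S l i)" and ?Rb = "suminf (wres qb qa S l i)"
  have AB: "suminf (wmin qb qa S l i) = ?A" by (simp add: wmin_comm)
  have nn: "0 \<le> ?A" "0 \<le> ?Ra" "0 \<le> ?Rb" using A_nn[OF i] R_nn[OF i] B.R_nn[OF i] by auto
  have meas: "{u. mk qa qb S l i u \<noteq> mk qb qa S l i u} \<in> sets borel"
  proof -
    have "{u. mk qa qb S l i u \<noteq> mk qb qa S l i u} = {u\<in>space borel. mk qa qb S l i u \<noteq> mk qb qa S l i u}" by simp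
    also have "\<dots> \<in> sets borel" by measurable
    finally show ?thesis .
  qed
  have sub: "{0..1} \<inter> {u. mk qa qb S l i u \<noteq> mk qb qa S l i u} \<subseteq> {?A..<?A + ?Ra + ?Rb}"
  proof
    fix u assume u: "u \<in> {0..1} \<inter> {u. mk qa qb S l i u \<noteq> mk qb qa S l i u}"
    have "\<not> u < ?A"
    proof
      assume "u < ?A"
      then have "mk qa qb S l i u = Gq (wmin qa qb S l i) u" "mk qb qa S l i u = Gq (wmin qb qa S l i) u"
        using u mk_a[OF i] B.mk_a[OF i, of u] AB by auto
      then show False using u by (simp add: wmin_comm)
    qed
    moreover have "\<not> ?A + ?Ra + ?Rb \<le> u"
    proof
      assume "?A + ?Ra + ?Rb \<le> u"
      then have "mk qa qb S l i u = i" "mk qb qa S l i u = i"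
        using nn mk_c[OF i, of u] B.mk_c[OF i, of u] AB by auto
      then show False using u by simp
    qed
    ultimately show "u \<in> {?A..<?A + ?Ra + ?Rb}" by auto
  qed
  have "measure muU {u. mk qa qb S l i u \<noteq> mk qb qa S l i u} = measure lborel ({0..1} \<inter> {u. mk qa qb S l i u \<noteq> mk qb qa S l i u})"
    by (rule measure_muU[OF meas])
  also have "\<dots> \<le> measure lborel {?A..<?A + ?Ra + ?Rb}"
    by (rule measure_mono_fmeasurable[OF sub]) (use meas nn in \<open>auto simp: fmeasurable_def\<close>)
  also have "\<dots> = ?Ra + ?Rb" using nn by simp
  also have "?Ra + ?Rb = (\<Sum>\<^sub>\<infinity>j\<in>S - {i}. \<bar>qa i j - qb i j\<bar>) / l"
  proof -
    have eq: "wres qa qb S l i j + wres qb qa S l i j = ext S i (\<lambda>j. \<bar>qa i j - qb i j\<bar> / l) j" for j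
      using l_pos by (simp add: wres_def ext_def add_divide_distrib[symmetric] min_def abs_if)
    have "?Ra + ?Rb = (\<Sum>j. wres qa qb S l i j + wres qb qa S l i j)"
      by (rule suminf_add[OF wres_summable[OF i] B.wres_summable[OF i]])
    also have "\<dots> = suminf (ext S i (\<lambda>j. \<bar>qa i j - qb i j\<bar> / l))" by (simp only: eq)
    also have "\<dots> = (\<Sum>\<^sub>\<infinity>j\<in>S - {i}. \<bar>qa i j - qb i j\<bar> / l)"
      by (rule sums_unique[symmetric], rule ext_sums, rule summable_on_cdiv_left, rule absdiff_sum[OF i])
    also have "\<dots> = (\<Sum>\<^sub>\<infinity>j\<in>S - {i}. \<bar>qa i j - qb i j\<bar>) / l"
      by (rule infsum_cdiv_left, rule absdiff_sum[OF i])
    finally show ?thesis .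
  qed
  finally show ?thesis .
qed

end


lemma cons_facts:
  assumes "conservative S q" "i \<in> S"
  shows "q i summable_on (S - {i})" "q i i = - (\<Sum>\<^sub>\<infinity>j\<in>S - {i}. q i j)"
    "\<And>j. j \<in> S \<Longrightarrow> j \<noteq> i \<Longrightarrow> 0 \<le> q i j"
proof -
  have hs: "(q i has_sum 0) S" using assms unfolding conservative_def by auto
  then have "q i summable_on S" by (auto simp: summable_on_def)
  then show sm: "q i summable_on (S - {i})" by (rule summable_on_subset_banach) auto
  have "(q i has_sum (q i i + (\<Sum>\<^sub>\<infinity>j\<in>S - {i}. q i j))) (insert i (S - {i}))"
    by (rule has_sum_insert) (use sm in auto)
  moreover have "insert i (S - {i}) = S" using assms(2) by auto
  ultimately have "(q i has_sum (q i i + (\<Sum>\<^sub>\<infinity>j\<in>S - {i}. q i j))) S" by simp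
  with hs have "q i i + (\<Sum>\<^sub>\<infinity>j\<in>S - {i}. q i j) = 0" using has_sum_unique by blast
  then show "q i i = - (\<Sum>\<^sub>\<infinity>j\<in>S - {i}. q i j)" by simp
  show "\<And>j. j \<in> S \<Longrightarrow> j \<noteq> i \<Longrightarrow> 0 \<le> q i j" using assms unfolding conservative_def by auto
qed

lemma bound_facts:
  assumes ub: "uniformly_bounded_rates S Q" and cons: "\<And>z. conservative S (Q z)"
  obtains B where "0 \<le> B" "\<And>z i. i \<in> S \<Longrightarrow> (\<Sum>\<^sub>\<infinity>j\<in>S - {i}. Q z i j) \<le> B"
proof -
  define K where "K = (SUP i\<in>S. \<integral>\<^sup>+ j. (SUP z. ennreal (Q z i j)) \<partial>count_space (S - {i}))"
  have K: "K < \<infinity>" using ub unfolding uniformly_bounded_rates_def K_def by simp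
  define B where "B = enn2real K"
  have KB: "K = ennreal B" using K unfolding B_def by (cases K) auto
  have B0: "0 \<le> B" unfolding B_def by simp
  have "(\<Sum>\<^sub>\<infinity>j\<in>S - {i}. Q z i j) \<le> B" if i: "i \<in> S" for z i
  proof -
    have sm: "Q z i summable_on (S - {i})" by (rule cons_facts(1)[OF cons i])
    have nn: "\<And>j. j \<in> S - {i} \<Longrightarrow> 0 \<le> Q z i j" using cons_facts(3)[OF cons i] by auto
    show ?thesis
    proof (rule has_sum_le_finite_sums)
      show "(Q z i has_sum (\<Sum>\<^sub>\<infinity>j\<in>S - {i}. Q z i j)) (S - {i})" using sm by simp
      fix F assume F: "finite F" "F \<subseteq> S - {i}"
      have "ennreal (sum (Q z i) F) = (\<Sum>j\<in>F. ennreal (Q z i j))"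
        using F nn by (intro sum_ennreal[symmetric]) auto
      also have "\<dots> = (\<integral>\<^sup>+ j. ennreal (Q z i j) \<partial>count_space F)"
        using F by (simp add: nn_integral_count_space_finite)
      also have "\<dots> \<le> (\<integral>\<^sup>+ j. (SUP z. ennreal (Q z i j)) \<partial>count_space (S - {i}))"
      proof -
        have "(\<integral>\<^sup>+ j. ennreal (Q z i j) \<partial>count_space F) = (\<integral>\<^sup>+ j. ennreal (Q z i j) * indicator F j \<partial>count_space UNIV)"
          by (rule nn_integral_count_space_indicator) simp
        also have "\<dots> \<le> (\<integral>\<^sup>+ j. (SUP z. ennreal (Q z i j)) * indicator (S - {i}) j \<partial>count_space UNIV)"
          using F by (intro nn_integral_mono) (auto intro: SUP_upper2 split: split_indicator)
        also have "\<dots> = (\<integral>\<^sup>+ j. (SUP z. ennreal (Q z i j)) \<partial>count_space (S - {i}))"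
          by (rule nn_integral_count_space_indicator[symmetric]) simp
        finally show ?thesis .
      qed
      also have "\<dots> \<le> K" unfolding K_def using i by (rule SUP_upper)
      finally show "sum (Q z i) F \<le> B" unfolding KB
        using F nn B0 by (auto simp: ennreal_le_iff2)
    qed
  qed
  moreover have "0 \<le> B" unfolding B_def by simp
  ultimately show ?thesis using that by blast
qed

definition enc :: "(real \<times> real) stream \<Rightarrow> nat \<Rightarrow> real" where
  "enc \<omega> = (\<lambda>n. if even n then fst (\<omega> !! (n div 2)) else snd (\<omega> !! (n div 2)))"

definition dec :: "(nat \<Rightarrow> real) \<Rightarrow> (real \<times> real) stream" where
  "dec f = smap (\<lambda>n. (f (2 * n), f (2 * n + 1))) nats"

lemma nats_snth: "nats !! n = n"
  by (induction n) auto

lemma dec_snth: "dec f !! n = (f (2 * n), f (2 * n + 1))"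
  by (simp add: dec_def nats_snth)

lemma dec_enc: "dec (enc \<omega>) = \<omega>"
proof -
  have "(\<lambda>n. (enc \<omega> (2 * n), enc \<omega> (2 * n + 1))) = snth \<omega>"
    by (auto simp: enc_def fun_eq_iff)
  then show ?thesis unfolding dec_def by (metis stream_smap_nats)
qed

definition Mdistr :: "real \<Rightarrow> (nat \<Rightarrow> real) measure" where
  "Mdistr l = distr (SS l) (\<Pi>\<^sub>M i\<in>UNIV. borel) enc"

lemma enc_measurable: "enc \<in> measurable (SS l) (\<Pi>\<^sub>M i\<in>UNIV. borel)"
  unfolding enc_def
proof (rule measurable_PiM_single')
  fix n :: nat
  show "(\<lambda>\<omega>. if even n then fst (\<omega> !! (n div 2)) else snd (\<omega> !! (n div 2))) \<in> borel_measurable (SS l)"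
    by (cases "even n") (simp_all add: SS_def)
qed auto

lemma dec_measurable: "dec \<in> measurable (\<Pi>\<^sub>M i\<in>UNIV. borel) (SS l)"
  unfolding SS_def
proof (rule measurable_stream_space2)
  fix n
  have "(\<lambda>f::nat \<Rightarrow> real. (f (2 * n), f (2 * n + 1))) \<in> measurable (\<Pi>\<^sub>M i\<in>UNIV. borel) (borel \<Otimes>\<^sub>M borel)"
    by measurable
  then show "(\<lambda>f. dec f !! n) \<in> measurable (\<Pi>\<^sub>M i\<in>UNIV. borel) (mu l)"
    by (simp add: dec_snth cong: measurable_cong_sets)
qed

lemma space_Mdistr[simp]: "space (Mdistr l) = UNIV"
  by (simp add: Mdistr_def space_PiM)

lemma sets_Mdistr[measurable_cong]: "sets (Mdistr l) = sets (\<Pi>\<^sub>M i\<in>UNIV. (borel :: real measure))"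
  by (simp add: Mdistr_def)

context ctmc_lam
begin

lemma prob_space_Mdistr: "prob_space (Mdistr lam)"
  unfolding Mdistr_def by (rule prob_space.prob_space_distr[OF prob_space_SS enc_measurable])

lemma Mdistr_measure:
  assumes B: "B \<in> sets (SS lam)"
  shows "measure (Mdistr lam) {f \<in> space (Mdistr lam). dec f \<in> B} = measure (SS lam) B"
proof -
  have "{f \<in> space (Mdistr lam). dec f \<in> B} = dec -` B \<inter> space (\<Pi>\<^sub>M i\<in>UNIV. (borel :: real measure))"
    by (auto simp: space_PiM)
  moreover have "dec -` B \<inter> space (\<Pi>\<^sub>M i\<in>UNIV. (borel :: real measure)) \<in> sets (\<Pi>\<^sub>M i\<in>UNIV. (borel :: real measure))"
    by (rule measurable_sets[OF dec_measurable B])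
  moreover have "enc -` (dec -` B \<inter> space (\<Pi>\<^sub>M i\<in>UNIV. (borel :: real measure))) \<inter> space (SS lam) = B"
    by (auto simp: dec_enc space_PiM)
  ultimately show ?thesis
    unfolding Mdistr_def by (simp only: measure_distr[OF enc_measurable])
qed

end


context ctmc_lam
begin

lemma is_ctmc_X:
  fixes F :: "nat \<Rightarrow> real \<Rightarrow> nat" and q :: "nat \<Rightarrow> nat \<Rightarrow> real"
  assumes F[measurable]: "\<And>i. F i \<in> measurable borel (count_space UNIV)"
    and FS: "\<And>i u. i \<in> S \<Longrightarrow> F i u \<in> S" and i0: "i0 \<in> S"
    and pi: "\<And>i j. i \<in> S \<Longrightarrow> j \<in> S \<Longrightarrow> lam * (measure muU {u. F i u = j} - (if i = j then 1 else 0)) = q i j"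
  shows "is_ctmc (Mdistr lam) S q i0 (\<lambda>t f. X F i0 i0 (dec f) t)"
proof -
  have h1: "(\<lambda>f. X F i0 i0 (dec f) t) \<in> measurable (Mdistr lam) (count_space UNIV)" for t
  proof -
    have "(\<lambda>f. X F i0 i0 (dec f) t) \<in> measurable (\<Pi>\<^sub>M i\<in>UNIV. (borel :: real measure)) (count_space UNIV)"
      by (rule measurable_compose[OF dec_measurable X_measurable[OF F]])
    then show ?thesis by (simp add: measurable_cong_sets[OF sets_Mdistr refl])
  qed
  have h2: "X F i0 i0 (dec f) t \<in> S" for f t by (rule X_in[OF FS i0 i0])
  have tf: "transition_function S q (pt F i0)"
    unfolding transition_function_def
  proof (intro conjI ballI allI impI)
    show "0 \<le> pt F i0 i j t" for i j t by (rule pt_nonneg)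
    show "((\<lambda>j. pt F i0 i j t) has_sum 1) S" if "i \<in> S" for i t by (rule pt_rowsum[OF F FS that i0])
    show "((\<lambda>k. pt F i0 i k s * pt F i0 k j t) has_sum pt F i0 i j (s + t)) S"
      if "i \<in> S" "0 \<le> s" "0 \<le> t" for i j s t by (rule pt_CK[OF F FS that(1) i0 that(2,3)])
    show "pt F i0 i j 0 = (if i = j then 1 else 0)" for i j by (rule pt_0)
    show "(pt F i0 i j has_real_derivative q i j) (at_right 0)" if "i \<in> S" "j \<in> S" for i j
      using pt_deriv[where F=F and c=i0 and i=i and j=j, OF F] pi[OF that] by simp
  qed
  have fd': "measure (Mdistr lam) {\<omega> \<in> space (Mdistr lam). \<forall>k\<le>n. X F i0 i0 (dec \<omega>) (ts k) = js k} =
       (if js 0 = i0 then 1 else 0) * (\<Prod>k<n. pt F i0 (js k) (js (Suc k)) (ts (Suc k) - ts k))"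
    if "ts 0 = 0" "\<forall>k<n. ts k < ts (Suc k)" for n ts js
  proof -
    define B where "B = {\<omega>. \<forall>k\<le>n. X F i0 i0 \<omega> (ts k) = js k}"
    have B: "B \<in> sets (SS lam)"
    proof -
      have "B = {\<omega>\<in>space (SS lam). \<forall>k\<le>n. X F i0 i0 \<omega> (ts k) = js k}" by (simp add: B_def)
      also have "\<dots> \<in> sets (SS lam)" by measurable
      finally show ?thesis .
    qed
    have "measure (Mdistr lam) {\<omega> \<in> space (Mdistr lam). \<forall>k\<le>n. X F i0 i0 (dec \<omega>) (ts k) = js k} =
        measure (Mdistr lam) {f \<in> space (Mdistr lam). dec f \<in> B}" by (simp add: B_def)
    also have "\<dots> = measure (SS lam) B" by (rule Mdistr_measure[OF B])
    also have "\<dots> = (if js 0 = i0 then 1 else 0) * (\<Prod>k<n. pt F i0 (js k) (js (Suc k)) (ts (Suc k) - ts k))"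
      unfolding B_def by (rule fd[OF F that])
    finally show ?thesis .
  qed
  have A: "\<forall>t\<ge>0. (\<lambda>f. X F i0 i0 (dec f) t) \<in> measurable (Mdistr lam) (count_space UNIV)"
    by (intro allI impI h1)
  have Bx: "\<forall>\<omega>\<in>space (Mdistr lam). \<forall>t\<ge>0. X F i0 i0 (dec \<omega>) t \<in> S" by (intro ballI allI impI h2)
  have Cx: "\<forall>\<omega>\<in>space (Mdistr lam). \<forall>t\<ge>0. \<exists>e>0. \<forall>s. t \<le> s \<and> s < t + e \<longrightarrow> X F i0 i0 (dec \<omega>) s = X F i0 i0 (dec \<omega>) t"
    by (intro ballI allI impI X_right_const)
  have Dx: "\<exists>p. transition_function S q p \<and>
        (\<forall>(n::nat) (ts::nat \<Rightarrow> real) (js::nat \<Rightarrow> nat).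
           ts 0 = 0 \<longrightarrow> (\<forall>k<n. ts k < ts (Suc k)) \<longrightarrow> (\<forall>k\<le>n. js k \<in> S) \<longrightarrow>
           measure (Mdistr lam) {\<omega>\<in>space (Mdistr lam). \<forall>k\<le>n. X F i0 i0 (dec \<omega>) (ts k) = js k} =
             (if js 0 = i0 then 1 else 0) *
             (\<Prod>k<n. p (js k) (js (Suc k)) (ts (Suc k) - ts k)))"
    by (intro exI[of _ "pt F i0"] conjI tf allI impI) (rule fd'; assumption)
  show ?thesis
    unfolding is_ctmc_def by (intro conjI prob_space_Mdistr A Bx Cx Dx)
qed

end


theorem corollary3p2:
  fixes N :: enat
    and Q :: "real^'d \<Rightarrow> nat \<Rightarrow> nat \<Rightarrow> real"
  assumes A2_cons: "\<And>z. conservative (state_space N) (Q z)"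
    and A2_irr: "\<And>z. irreducible_Q (state_space N) (Q z)"
    and A2_bound: "uniformly_bounded_rates (state_space N) Q"
  shows "\<forall>x y i0. i0 \<in> state_space N \<longrightarrow>
    (\<exists>(M :: (nat \<Rightarrow> real) measure) Y Y'.
       is_ctmc M (state_space N) (Q x) i0 Y \<and>
       is_ctmc M (state_space N) (Q y) i0 Y' \<and>
       (\<forall>t>0. (1 / t) * (\<integral>s\<in>{0..t}. measure M {\<omega>\<in>space M. Y s \<omega> \<noteq> Y' s \<omega>} \<partial>lborel)
                \<le> t * Q_dist (state_space N) (Q x) (Q y)))"
proof (intro allI impI)
  fix x y :: "real^'d" and i0 :: nat
  define S where "S = state_space N"
  assume "i0 \<in> state_space N"
  then have i0: "i0 \<in> S" by (simp add: S_def)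
  have cons: "\<And>z. conservative S (Q z)" using A2_cons by (simp add: S_def)
  obtain B where B0: "0 \<le> B" and Bb: "\<And>z i. i \<in> S \<Longrightarrow> (\<Sum>\<^sub>\<infinity>j\<in>S - {i}. Q z i j) \<le> B"
    using bound_facts[OF A2_bound[folded S_def] cons] by blast
  define lam where "lam = B + 1"
  have lam_pos: "0 < lam" using B0 by (simp add: lam_def)
  interpret L: ctmc_lam lam by unfold_locales (rule lam_pos)
  have bd: "(\<Sum>\<^sub>\<infinity>j\<in>S - {i}. Q z i j) \<le> lam" if "i \<in> S" for z i
    using Bb[OF that, of z] by (simp add: lam_def)
  interpret MK: marks "Q x" "Q y" S lam
  proof unfold_locales
    show "0 < lam" by (rule lam_pos)
    show "0 \<le> Q x i j" if "i \<in> S" "j \<in> S" "i \<noteq> j" for i j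
      using cons_facts(3)[OF cons that(1) that(2)] that(3) by simp
    show "0 \<le> Q y i j" if "i \<in> S" "j \<in> S" "i \<noteq> j" for i j
      using cons_facts(3)[OF cons that(1) that(2)] that(3) by simp
    show "Q x i summable_on (S - {i})" if "i \<in> S" for i by (rule cons_facts(1)[OF cons that])
    show "Q y i summable_on (S - {i})" if "i \<in> S" for i by (rule cons_facts(1)[OF cons that])
    show "(\<Sum>\<^sub>\<infinity>j\<in>S - {i}. Q x i j) \<le> lam" if "i \<in> S" for i by (rule bd[OF that])
    show "(\<Sum>\<^sub>\<infinity>j\<in>S - {i}. Q y i j) \<le> lam" if "i \<in> S" for i by (rule bd[OF that])
  qed
  interpret MK2: marks "Q y" "Q x" S lam by (rule MK.sym)
  define D where "D = Q_dist S (Q x) (Q y)"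
  have row_le: "(\<Sum>\<^sub>\<infinity>j\<in>S - {i}. \<bar>Q x i j - Q y i j\<bar>) \<le> 2 * B" if i: "i \<in> S" for i
  proof -
    have "(\<Sum>\<^sub>\<infinity>j\<in>S - {i}. \<bar>Q x i j - Q y i j\<bar>) \<le> (\<Sum>\<^sub>\<infinity>j\<in>S - {i}. Q x i j + Q y i j)"
      by (rule infsum_mono[OF MK.absdiff_sum[OF i] summable_on_add[OF MK.qa_sum[OF i] MK.qb_sum[OF i]]])
         (use i MK.qa_nn MK.qb_nn in \<open>auto simp: abs_le_iff\<close>)
    also have "\<dots> = (\<Sum>\<^sub>\<infinity>j\<in>S - {i}. Q x i j) + (\<Sum>\<^sub>\<infinity>j\<in>S - {i}. Q y i j)"
      by (rule infsum_add[OF MK.qa_sum[OF i] MK.qb_sum[OF i]])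
    also have "\<dots> \<le> 2 * B" using Bb[OF i, of x] Bb[OF i, of y] by simp
    finally show ?thesis .
  qed
  have rowD: "(\<Sum>\<^sub>\<infinity>j\<in>S - {i}. \<bar>Q x i j - Q y i j\<bar>) \<le> D" if i: "i \<in> S" for i
    unfolding D_def Q_dist_def
    by (rule cSUP_upper[OF i], rule bdd_aboveI2, rule row_le)
  have D0: "0 \<le> D"
    using rowD[OF i0] infsum_nonneg[of "S - {i0}" "\<lambda>j. \<bar>Q x i0 j - Q y i0 j\<bar>"] by simp
  define Fx where "Fx = mk (Q x) (Q y) S lam"
  define Fy where "Fy = mk (Q y) (Q x) S lam"
  interpret C: coupling lam Fx Fy S i0 "D / lam"
  proof unfold_locales
    show "\<And>i. Fx i \<in> measurable borel (count_space UNIV)" "\<And>i. Fy i \<in> measurable borel (count_space UNIV)"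
      by (simp_all add: Fx_def Fy_def)
    show "\<And>i u. i \<in> S \<Longrightarrow> Fx i u \<in> S" using MK.mk_in by (simp add: Fx_def)
    show "\<And>i u. i \<in> S \<Longrightarrow> Fy i u \<in> S" using MK2.mk_in by (simp add: Fy_def)
    show "i0 \<in> S" by (rule i0)
    fix k assume k: "k \<in> S"
    have "measure muU {u. Fx k u \<noteq> Fy k u} \<le> (\<Sum>\<^sub>\<infinity>j\<in>S - {k}. \<bar>Q x k j - Q y k j\<bar>) / lam"
      unfolding Fx_def Fy_def by (rule MK.mk_couple[OF k])
    also have "\<dots> \<le> D / lam" using rowD[OF k] lam_pos by (simp add: divide_right_mono)
    finally show "measure muU {u. Fx k u \<noteq> Fy k u} \<le> D / lam" .
  qed
  have pix: "lam * (measure muU {u. Fx i u = j} - (if i = j then 1 else 0)) = Q x i j"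
    if "i \<in> S" "j \<in> S" for i j
  proof (cases "i = j")
    case True
    have "lam * ((1 - (\<Sum>\<^sub>\<infinity>j\<in>S - {i}. Q x i j) / lam) - 1) = - (\<Sum>\<^sub>\<infinity>j\<in>S - {i}. Q x i j)"
      using lam_pos by (simp add: algebra_simps)
    then show ?thesis using MK.mk_prob_diag[OF that(1)] cons_facts(2)[OF cons that(1)] True
      by (simp add: Fx_def)
  next
    case False
    then show ?thesis using MK.mk_prob_off[OF that(1) that(2)] lam_pos by (simp add: Fx_def)
  qed
  have piy: "lam * (measure muU {u. Fy i u = j} - (if i = j then 1 else 0)) = Q y i j"
    if "i \<in> S" "j \<in> S" for i j
  proof (cases "i = j")
    case True
    have "lam * ((1 - (\<Sum>\<^sub>\<infinity>j\<in>S - {i}. Q y i j) / lam) - 1) = - (\<Sum>\<^sub>\<infinity>j\<in>S - {i}. Q y i j)"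
      using lam_pos by (simp add: algebra_simps)
    then show ?thesis using MK2.mk_prob_diag[OF that(1)] cons_facts(2)[OF cons that(1)] True
      by (simp add: Fy_def)
  next
    case False
    then show ?thesis using MK2.mk_prob_off[OF that(1) that(2)] lam_pos by (simp add: Fy_def)
  qed
  define M where "M = Mdistr lam"
  define Y where "Y = (\<lambda>t f. X Fx i0 i0 (dec f) t)"
  define Y' where "Y' = (\<lambda>t f. X Fy i0 i0 (dec f) t)"
  have c1: "is_ctmc M S (Q x) i0 Y"
    unfolding M_def Y_def by (rule L.is_ctmc_X[OF C.Fx_meas C.FxS i0 pix])
  have c2: "is_ctmc M S (Q y) i0 Y'"
    unfolding M_def Y'_def by (rule L.is_ctmc_X[OF C.Fy_meas C.FyS i0 piy])
  have g: "measure M {\<omega>\<in>space M. Y s \<omega> \<noteq> Y' s \<omega>} \<le> D * s" if s: "0 \<le> s" for s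
  proof -
    have "measure M {\<omega>\<in>space M. Y s \<omega> \<noteq> Y' s \<omega>} = measure (Mdistr lam) {f \<in> space (Mdistr lam). dec f \<in> {\<omega>. X Fx i0 i0 \<omega> s \<noteq> X Fy i0 i0 \<omega> s}}"
      by (simp add: M_def Y_def Y'_def)
    also have "\<dots> = C.G i0 s" unfolding C.G_def by (rule L.Mdistr_measure[OF C.G_set])
    also have "\<dots> \<le> lam * (D / lam) * s" by (rule C.G_bound[OF i0 s])
    also have "\<dots> = D * s" using lam_pos by simp
    finally show ?thesis .
  qed
  have main: "(1 / t) * (\<integral>s\<in>{0..t}. measure M {\<omega>\<in>space M. Y s \<omega> \<noteq> Y' s \<omega>} \<partial>lborel) \<le> t * D"
    if t: "0 < t" for t
  proof -
    define h where "h s = measure M {\<omega>\<in>space M. Y s \<omega> \<noteq> Y' s \<omega>}" for s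
    have I: "(\<integral>s\<in>{0..t}. h s \<partial>lborel) \<le> t * (D * t)"
    proof (cases "set_integrable lborel {0..t} h")
      case True
      have ci: "set_integrable lborel {0..t} (\<lambda>_. D * t)"
        unfolding set_integrable_def by (intro integrable_scaleR_left integrable_real_indicator) (use t in auto)
      have "(\<integral>s\<in>{0..t}. h s \<partial>lborel) \<le> (\<integral>s\<in>{0..t}. D * t \<partial>lborel)"
      proof (rule set_integral_mono[OF True ci])
        fix s assume "s \<in> {0..t}"
        then have "h s \<le> D * s" "D * s \<le> D * t" using g[of s] D0 by (auto simp: h_def intro: mult_left_mono)
        then show "h s \<le> D * t" by linarith
      qed
      also have "\<dots> = t * (D * t)" using t by (subst set_integral_const) auto
      finally show ?thesis .
    next
      case False
      then have "(\<integral>s\<in>{0..t}. h s \<partial>lborel) = 0"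
        unfolding set_integrable_def set_lebesgue_integral_def by (rule not_integrable_integral_eq)
      then show ?thesis using t D0 by simp
    qed
    have "(1 / t) * (\<integral>s\<in>{0..t}. h s \<partial>lborel) \<le> (1 / t) * (t * (D * t))"
      using I t by (intro mult_left_mono) auto
    also have "\<dots> = t * D" using t by simp
    finally show ?thesis by (simp add: h_def)
  qed
  show "\<exists>(M :: (nat \<Rightarrow> real) measure) Y Y'.
       is_ctmc M (state_space N) (Q x) i0 Y \<and>
       is_ctmc M (state_space N) (Q y) i0 Y' \<and>
       (\<forall>t>0. (1 / t) * (\<integral>s\<in>{0..t}. measure M {\<omega>\<in>space M. Y s \<omega> \<noteq> Y' s \<omega>} \<partial>lborel)
                \<le> t * Q_dist (state_space N) (Q x) (Q y))"
    using c1 c2 main unfolding S_def D_def by blast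
qed


end
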